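(* Let $|\psi\rangle=\sum_i\sqrt{\lambda_i}|x_i\rangle\otimes|y_i\rangle$ be a pure state on $\mathcal H_a\otimes\mathcal H_b$ in Schmidt form, with $\lambda_1\ge\lambda_2\ge\dots\ge0$, $\sum_i\lambda_i=1$. Then $$C^a_{A,cc}(|\psi\rangle)=1-\sum_i\lambda_i^2,\qquad C^a_{F,cc}(|\psi\rangle)=1-\lambda_1 .$$ Moreover, for the affinity a closest classical-quantum state is $\sum_i\frac{\lambda_i^2}{\sum_j\lambda_j^2}|x_i\otimes y_i\rangle\langle x_i\otimes y_i|$.
   Context: $F(\rho,\sigma)=\mathrm{Tr}\sqrt{\sqrt\sigma\rho\sqrt\sigma}$, $A(\rho,\sigma)=\mathrm{Tr}(\sqrt\rho\sqrt\sigma)$, $d_X=1-X^2$ for $X\in\{F,A\}$. For an orthonormal basis $\mathcal B=\{|\alpha_i\rangle\}$ of $\mathcal H_a$, $C^a_X(\rho^{ab};\mathcal B)=\min d_X(\rho^{ab},\sigma)$ over states $\sigma=\sum_ip_i|\alpha_i\rangle\langle\alpha_i|\otimes\sigma_i$, and $C^a_{X,cc}(\rho^{ab})=\min_{\mathcal B}C^a_X(\rho^{ab};\mathcal B)$ over orthonormal eigenbases $\mathcal B$ of $\rho^a=\mathrm{Tr}_b\rho^{ab}$. *)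

theory Defs
  imports "HOL-Analysis.Analysis"
begin

text \<open>Finite-dimensional Hilbert spaces are modelled as complex^'n for a finite
index type 'n; operators as complex^'n^'n; H_a \<otimes> H_b is indexed by 'a \<times> 'b.\<close>

definition cinner :: "complex^'n \<Rightarrow> complex^'n \<Rightarrow> complex" where
  "cinner u v = (\<Sum>i\<in>UNIV. cnj (u$i) * v$i)"

definition outer :: "complex^'n \<Rightarrow> complex^'n \<Rightarrow> complex^'n^'n" where
  "outer u v = (\<chi> i j. u$i * cnj (v$j))"

definition tensor_vec :: "complex^'a \<Rightarrow> complex^'b \<Rightarrow> complex^('a::finite \<times> 'b::finite)" where
  "tensor_vec u v = (\<chi> p. u$(fst p) * v$(snd p))"

definition tensor_mat :: "complex^'a^'a \<Rightarrow> complex^'b^'b \<Rightarrow> complex^('a::finite \<times> 'b::finite)^('a::finite \<times> 'b::finite)" where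
  "tensor_mat A B = (\<chi> p q. A$(fst p)$(fst q) * B$(snd p)$(snd q))"

definition mtrace :: "complex^'n^'n \<Rightarrow> complex" where
  "mtrace A = (\<Sum>i\<in>UNIV. A$i$i)"

definition ptrace_b :: "complex^('a::finite \<times> 'b::finite)^('a::finite \<times> 'b::finite) \<Rightarrow> complex^'a^'a" where
  "ptrace_b R = (\<chi> i i'. \<Sum>j\<in>UNIV. R$(i,j)$(i',j))"

definition psd :: "complex^'n^'n \<Rightarrow> bool" where
  "psd A \<longleftrightarrow> (\<forall>v. Im (cinner v (A *v v)) = 0 \<and> Re (cinner v (A *v v)) \<ge> 0)"

definition density :: "complex^'n^'n \<Rightarrow> bool" where
  "density \<rho> \<longleftrightarrow> psd \<rho> \<and> mtrace \<rho> = 1"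

definition msqrt :: "complex^'n^'n \<Rightarrow> complex^'n^'n" where
  "msqrt A = (THE B. psd B \<and> B ** B = A)"

definition fidelity :: "complex^'n^'n \<Rightarrow> complex^'n^'n \<Rightarrow> real" where
  "fidelity \<rho> \<sigma> = Re (mtrace (msqrt (msqrt \<sigma> ** \<rho> ** msqrt \<sigma>)))"

definition affinity :: "complex^'n^'n \<Rightarrow> complex^'n^'n \<Rightarrow> real" where
  "affinity \<rho> \<sigma> = Re (mtrace (msqrt \<rho> ** msqrt \<sigma>))"

definition d_F :: "complex^'n^'n \<Rightarrow> complex^'n^'n \<Rightarrow> real" where
  "d_F \<rho> \<sigma> = 1 - (fidelity \<rho> \<sigma>)\<^sup>2"

definition d_A :: "complex^'n^'n \<Rightarrow> complex^'n^'n \<Rightarrow> real" where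
  "d_A \<rho> \<sigma> = 1 - (affinity \<rho> \<sigma>)\<^sup>2"

definition orthonormal_basis :: "('a \<Rightarrow> complex^'a) \<Rightarrow> bool" where
  "orthonormal_basis \<alpha> \<longleftrightarrow> (\<forall>i j. cinner (\<alpha> i) (\<alpha> j) = (if i = j then 1 else 0))"

definition eigenbasis :: "complex^'a^'a \<Rightarrow> ('a \<Rightarrow> complex^'a) \<Rightarrow> bool" where
  "eigenbasis M \<alpha> \<longleftrightarrow> orthonormal_basis \<alpha> \<and> (\<forall>i. \<exists>\<mu>. M *v \<alpha> i = \<mu> *s \<alpha> i)"

definition cq_states :: "('a \<Rightarrow> complex^'a) \<Rightarrow> (complex^('a::finite \<times> 'b::finite)^('a::finite \<times> 'b::finite)) set" where
  "cq_states \<alpha> = {\<sigma>. \<exists>(p::'a \<Rightarrow> real) (\<sigma>s::'a \<Rightarrow> complex^'b^'b).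
      (\<forall>i. p i \<ge> 0) \<and> sum p UNIV = 1 \<and> (\<forall>i. density (\<sigma>s i)) \<and>
      \<sigma> = (\<Sum>i\<in>UNIV. p i *\<^sub>R tensor_mat (outer (\<alpha> i) (\<alpha> i)) (\<sigma>s i))}"

definition C_basis :: "(complex^('a::finite \<times> 'b::finite)^('a::finite \<times> 'b::finite) \<Rightarrow> complex^('a::finite \<times> 'b::finite)^('a::finite \<times> 'b::finite) \<Rightarrow> real)
    \<Rightarrow> complex^('a::finite \<times> 'b::finite)^('a::finite \<times> 'b::finite) \<Rightarrow> ('a \<Rightarrow> complex^'a) \<Rightarrow> real" where
  "C_basis d \<rho> \<alpha> = Inf {d \<rho> \<sigma> | \<sigma>. \<sigma> \<in> cq_states \<alpha>}"

definition C_cc :: "(complex^('a::finite \<times> 'b::finite)^('a::finite \<times> 'b::finite) \<Rightarrow> complex^('a::finite \<times> 'b::finite)^('a::finite \<times> 'b::finite) \<Rightarrow> real)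
    \<Rightarrow> complex^('a::finite \<times> 'b::finite)^('a::finite \<times> 'b::finite) \<Rightarrow> real" where
  "C_cc d \<rho> = Inf {C_basis d \<rho> \<alpha> | \<alpha>. eigenbasis (ptrace_b \<rho>) \<alpha>}"

end

theory Submission
  imports Defs
begin


lemma cinner_add_right: "cinner u (v + w) = cinner u v + cinner u w"
  by (simp add: cinner_def distrib_left sum.distrib)
lemma cinner_add_left: "cinner (u + v) w = cinner u w + cinner v w"
  by (simp add: cinner_def distrib_right sum.distrib)
lemma cinner_diff_right: "cinner u (v - w) = cinner u v - cinner u w"
  by (simp add: cinner_def right_diff_distrib sum_subtractf)
lemma cinner_diff_left: "cinner (u - v) w = cinner u w - cinner v w"
  by (simp add: cinner_def left_diff_distrib sum_subtractf)
lemma cinner_scale_right: "cinner u (c *s v) = c * cinner u v"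
  by (simp add: cinner_def sum_distrib_left ac_simps)
lemma cinner_scale_left: "cinner (c *s u) v = cnj c * cinner u v"
  by (simp add: cinner_def sum_distrib_left ac_simps)
lemma cinner_sum_right: "cinner u (sum f S) = (\<Sum>x\<in>S. cinner u (f x))"
  by (simp add: cinner_def sum_component sum_distrib_left) (rule sum.swap)
lemma cinner_sum_left: "cinner (sum f S) u = (\<Sum>x\<in>S. cinner (f x) u)"
  by (simp add: cinner_def sum_component sum_distrib_right) (rule sum.swap)
lemma cinner_cnj: "cnj (cinner u v) = cinner v u"
  by (simp add: cinner_def ac_simps)
lemma cinner_zero_left[simp]: "cinner 0 v = 0" by (simp add: cinner_def)
lemma cinner_zero_right[simp]: "cinner v 0 = 0" by (simp add: cinner_def)
lemma cinner_neg_right: "cinner u (- v) = - cinner u v" by (simp add: cinner_def sum_negf)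
lemma cinner_neg_left: "cinner (- u) v = - cinner u v" by (simp add: cinner_def sum_negf)

lemmas cinner_simps = cinner_add_right cinner_add_left cinner_diff_right cinner_diff_left
  cinner_scale_right cinner_scale_left cinner_sum_right cinner_sum_left cinner_neg_right cinner_neg_left

lemma cinner_self: "cinner v v = of_real (\<Sum>i\<in>UNIV. (cmod (v$i))\<^sup>2)"
proof -
  have "\<And>z. cnj z * z = complex_of_real ((cmod z)\<^sup>2)"
    by (metis complex_mult_cnj complex_norm_square mult.commute)
  then show ?thesis by (simp add: cinner_def)
qed

lemma cinner_self_real: "cinner v v = of_real (Re (cinner v v))"
  by (simp add: cinner_self)
lemma cinner_self_nonneg: "Re (cinner v v) \<ge> 0"
  by (simp add: cinner_self sum_nonneg)
lemma cinner_self_Im: "Im (cinner v v) = 0"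
  by (simp add: cinner_self)

lemma cinner_self_eq_0: "cinner v v = 0 \<longleftrightarrow> v = 0"
proof
  assume "cinner v v = 0"
  then have "(\<Sum>i\<in>UNIV. (cmod (v$i))\<^sup>2) = 0" by (simp only: cinner_self of_real_eq_0_iff)
  then have "\<forall>i\<in>UNIV. (cmod (v$i))\<^sup>2 = 0" by (subst (asm) sum_nonneg_eq_0_iff) auto
  then show "v = 0" by (simp add: vec_eq_iff)
qed simp

lemma cinner_self_pos: "v \<noteq> 0 \<Longrightarrow> Re (cinner v v) > 0"
  using cinner_self_nonneg[of v] cinner_self_eq_0[of v] cinner_self_real[of v]
  by (metis less_eq_real_def of_real_0)

definition adj :: "complex^'n^'m \<Rightarrow> complex^'m^'n" where
  "adj A = (\<chi> i j. cnj (A$j$i))"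

lemma cinner_adj: "cinner u (A *v v) = cinner (adj A *v u) v"
  by (simp add: cinner_def adj_def matrix_vector_mult_def sum_distrib_left sum_distrib_right
      ac_simps sum_component) (rule sum.swap)

definition herm :: "complex^'n^'n \<Rightarrow> bool" where
  "herm A \<longleftrightarrow> adj A = A"

lemma herm_cinner: "herm A \<Longrightarrow> cinner u (A *v v) = cinner (A *v u) v"
  by (simp add: herm_def cinner_adj)

lemma cinner_axis_left: "cinner (axis i a) v = cnj a * v$i"
proof -
  have "(\<lambda>k. cnj ((axis i a)$k) * v$k) = (\<lambda>k. if k = i then cnj a * v$k else 0)"
    by (auto simp: axis_def)
  then show ?thesis unfolding cinner_def by (subst (asm) fun_eq_iff) (simp add: sum.delta)
qed
lemma cinner_axis_right: "cinner v (axis i a) = cnj (v$i) * a"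
proof -
  have "(\<lambda>k. cnj (v$k) * (axis i a)$k) = (\<lambda>k. if k = i then cnj (v$k) * a else 0)"
    by (auto simp: axis_def)
  then show ?thesis unfolding cinner_def by (subst (asm) fun_eq_iff) (simp add: sum.delta)
qed

lemma mv_axis: "(A *v axis j b) $ i = A$i$j * b"
proof -
  have "(\<lambda>k. A$i$k * (axis j b)$k) = (\<lambda>k. if k = j then A$i$k * b else 0)"
    by (auto simp: axis_def)
  then show ?thesis unfolding matrix_vector_mult_def by (subst (asm) fun_eq_iff) (simp add: sum.delta)
qed

lemma psd_herm:
  assumes "psd A" shows "herm A"
proof -
  have q: "\<And>v. Im (cinner v (A *v v)) = 0" using assms by (simp add: psd_def)
  have ent: "A$i$j = cnj (A$j$i)" for i j
  proof -
    have cw: "cinner (axis i a) (A *v axis j b) = cnj a * b * A$i$j" for a b i j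
      by (simp add: cinner_axis_left mv_axis)
    have lin: "A *v (u + w) = A *v u + A *v w" for u w
      by (simp add: matrix_vector_right_distrib)
    have e1: "Im (cinner (axis i 1 + axis j 1) (A *v (axis i 1 + axis j 1))) = 0" by (rule q)
    have e2: "Im (cinner (axis i 1 + axis j \<i>) (A *v (axis i 1 + axis j \<i>))) = 0" by (rule q)
    have ii: "Im (A$i$i) = 0" using q[of "axis i 1"] by (simp add: cinner_axis_left mv_axis)
    have jj: "Im (A$j$j) = 0" using q[of "axis j 1"] by (simp add: cinner_axis_left mv_axis)
    have ex: "cinner (u1 + u2) (A *v (u1 + u2)) = cinner u1 (A *v u1) + cinner u1 (A *v u2) + cinner u2 (A *v u1) + cinner u2 (A *v u2)" for u1 u2
      by (simp only: lin cinner_add_left cinner_add_right add_ac)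
    from e1 have "Im (A$i$i) + Im (A$i$j) + Im (A$j$i) + Im (A$j$j) = 0"
      unfolding ex cw by simp
    moreover from e2 have "Im (A$i$i) + Re (A$i$j) - Re (A$j$i) + Im (A$j$j) = 0"
      unfolding ex cw by simp
    ultimately show ?thesis using ii jj by (simp add: complex_eq_iff)
  qed
  then show ?thesis unfolding herm_def adj_def vec_eq_iff vec_lambda_beta by (metis complex_cnj_cnj)
qed



lemma outer_mv: "outer u v *v w = cinner v w *s u"
  by (simp add: outer_def matrix_vector_mult_def cinner_def vec_eq_iff sum_distrib_left ac_simps)

lemma sum_mv: "(sum f S) *v v = (\<Sum>x\<in>S. f x *v v)"
  apply (simp add: matrix_vector_mult_def vec_eq_iff sum_component sum_distrib_right)
  apply (rule allI, rule sum.swap) done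

lemma scaleR_mat_comp: "(r *\<^sub>R (A::complex^'n^'m))$i$j = complex_of_real r * A$i$j"
  by (simp only: vector_scaleR_component) (simp add: scaleR_conv_of_real)
lemma scaleR_mv: "(r *\<^sub>R (A::complex^'n^'m)) *v v = complex_of_real r *s (A *v v)"
  unfolding matrix_vector_mult_def vec_eq_iff scaleR_mat_comp
  by (simp add: sum_distrib_left ac_simps)

lemma mv_scale: "(A::complex^'n^'m) *v (c *s v) = c *s (A *v v)"
  by (simp add: matrix_vector_mult_def vec_eq_iff sum_distrib_left ac_simps)

lemma mv_sum: "(A::complex^'n^'m) *v (sum f S) = (\<Sum>x\<in>S. A *v f x)"
  apply (simp add: matrix_vector_mult_def vec_eq_iff sum_component sum_distrib_left)
  apply (rule allI, rule sum.swap) done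

lemma mv_add: "(A::complex^'n^'m) *v (u + v) = A *v u + A *v v"
  by (simp add: matrix_vector_right_distrib)
lemma mv_diff: "(A::complex^'n^'m) *v (u - v) = A *v u - A *v v"
  by (simp add: matrix_vector_mult_diff_distrib)
lemma add_mv: "((A::complex^'n^'m) + B) *v v = A *v v + B *v v"
  by (simp add: matrix_vector_mult_add_rdistrib)

definition orthon :: "('i \<Rightarrow> complex^'n) \<Rightarrow> 'i set \<Rightarrow> bool" where
  "orthon e L \<longleftrightarrow> (\<forall>i\<in>L. \<forall>j\<in>L. cinner (e i) (e j) = (if i = j then 1 else 0))"

lemma orthon_inj: "orthon e L \<Longrightarrow> inj_on e L"
  unfolding orthon_def inj_on_def by (metis zero_neq_one)

lemma sum_delta_cinner:
  assumes "orthon e L" "finite L" "m \<in> L"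
  shows "(\<Sum>l\<in>L. c l * cinner (e m) (e l)) = c m"
proof -
  have "(\<Sum>l\<in>L. c l * cinner (e m) (e l)) = (\<Sum>l\<in>L. if l = m then c l else 0)"
    using assms by (intro sum.cong) (auto simp: orthon_def)
  then show ?thesis using assms by (simp add: sum.delta')
qed

lemma cinner_expand:
  assumes "orthon e L" "finite L" "m \<in> L"
  shows "cinner (e m) (\<Sum>l\<in>L. c l *s e l) = c m"
  using sum_delta_cinner[OF assms] by (simp add: cinner_sum_right cinner_scale_right)

lemma orthon_indep:
  assumes "orthon e L" "finite L"
  shows "vec.independent (e ` L)"
proof
  assume "vec.dependent (e ` L)"
  then obtain u where u: "\<exists>v\<in>e ` L. u v \<noteq> 0" "(\<Sum>v\<in>e ` L. u v *s v) = 0"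
    using vec.dependent_finite[of "e ` L"] assms by auto
  have inj: "inj_on e L" using orthon_inj[OF assms(1)] .
  have s: "(\<Sum>l\<in>L. u (e l) *s e l) = 0" using u(2) by (simp add: sum.reindex[OF inj])
  from u(1) obtain m where m: "m \<in> L" "u (e m) \<noteq> 0" by auto
  have "cinner (e m) (\<Sum>l\<in>L. u (e l) *s e l) = u (e m)" by (rule cinner_expand[OF assms m(1)])
  with s m show False by simp
qed

lemma orthon_card:
  fixes e :: "'i \<Rightarrow> complex^'n::finite"
  assumes "orthon e L" "finite L"
  shows "card L \<le> CARD('n)"
proof -
  have "card (e ` L) \<le> vec.dim (UNIV :: (complex^'n) set)"
    using vec.independent_bound_general[OF orthon_indep[OF assms]] vec.dim_subset_UNIV[of "e ` L"] vec.dim_UNIV vec.dimension_def by (metis le_trans)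
  then show ?thesis using card_image[OF orthon_inj[OF assms(1)]] by (simp add: vec_dim_card card_cart_basis)
qed

lemma orthon_complete:
  fixes e :: "'i \<Rightarrow> complex^'n::finite"
  assumes "orthon e L" "finite L" "card L = CARD('n)"
  shows "v = (\<Sum>l\<in>L. cinner (e l) v *s e l)"
proof -
  have inj: "inj_on e L" using orthon_inj[OF assms(1)] .
  have "(UNIV :: (complex^'n) set) \<subseteq> vec.span (e ` L)"
    by (rule vec.card_ge_dim_independent) (use orthon_indep[OF assms(1,2)] card_image[OF inj] assms(3) in \<open>auto simp: vec_dim_card card_cart_basis\<close>)
  then have "v \<in> vec.span (e ` L)" by auto
  then obtain c where c: "v = (\<Sum>w\<in>e ` L. c w *s w)"
    using vec.span_finite[of "e ` L"] assms(2) by auto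
  then have c': "v = (\<Sum>l\<in>L. c (e l) *s e l)" by (simp add: sum.reindex[OF inj])
  have "(\<Sum>l\<in>L. cinner (e l) v *s e l) = (\<Sum>l\<in>L. c (e l) *s e l)"
    by (rule sum.cong) (auto simp: c' cinner_expand[OF assms(1,2)])
  then show ?thesis using c' by simp
qed

lemma orthon_extend:
  fixes e :: "'i \<Rightarrow> complex^'n::finite"
  assumes "orthon e L" "finite L" "card L < CARD('n)"
  shows "\<exists>w. cinner w w = 1 \<and> (\<forall>l\<in>L. cinner (e l) w = 0)"
proof -
  have inj: "inj_on e L" using orthon_inj[OF assms(1)] .
  have "\<not> (UNIV :: (complex^'n) set) \<subseteq> vec.span (e ` L)"
  proof
    assume "(UNIV :: (complex^'n) set) \<subseteq> vec.span (e ` L)"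
    then have "vec.dim (UNIV :: (complex^'n) set) \<le> card (e ` L)"
      using vec.dim_le_card assms(2) by blast
    then show False using assms(3) card_image[OF inj] by (simp add: vec_dim_card card_cart_basis)
  qed
  then obtain w0 where w0: "w0 \<notin> vec.span (e ` L)" by auto
  define r where "r = w0 - (\<Sum>l\<in>L. cinner (e l) w0 *s e l)"
  have "(\<Sum>l\<in>L. cinner (e l) w0 *s e l) \<in> vec.span (e ` L)"
    by (intro vec.span_sum vec.span_scale vec.span_base) auto
  then have rnz: "r \<noteq> 0" using w0 unfolding r_def by auto
  have rorth: "cinner (e m) r = 0" if "m \<in> L" for m
    unfolding r_def cinner_diff_right cinner_expand[OF assms(1,2) that] by simp
  define s where "s = Re (cinner r r)"
  have s: "s > 0" "cinner r r = of_real s" unfolding s_def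
    using cinner_self_pos[OF rnz] cinner_self_real by auto
  define w where "w = complex_of_real (1 / sqrt s) *s r"
  have "cinner w w = of_real (1 / sqrt s) * of_real (1 / sqrt s) * of_real s"
    by (simp add: w_def cinner_scale_left cinner_scale_right s)
  also have "\<dots> = 1" using s(1)
    by (simp flip: of_real_mult)
  finally have "cinner w w = 1" .
  moreover have "\<forall>l\<in>L. cinner (e l) w = 0" by (simp add: w_def cinner_scale_right rorth)
  ultimately show ?thesis by blast
qed

lemma orthon_parseval:
  fixes e :: "'i \<Rightarrow> complex^'n::finite"
  assumes "orthon e L" "finite L" "card L = CARD('n)"
  shows "cinner u v = (\<Sum>l\<in>L. cnj (cinner (e l) u) * cinner (e l) v)"
proof -
  have "cinner u v = cinner (\<Sum>l\<in>L. cinner (e l) u *s e l) v"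
    using orthon_complete[OF assms, of u] by simp
  also have "\<dots> = (\<Sum>l\<in>L. cnj (cinner (e l) u) * cinner (e l) v)"
    by (simp add: cinner_sum_left cinner_scale_left)
  finally show ?thesis .
qed

lemma orthon_sum_outer:
  fixes e :: "'i \<Rightarrow> complex^'n::finite"
  assumes "orthon e L" "finite L" "card L = CARD('n)"
  shows "(\<Sum>l\<in>L. outer (e l) (e l)) = mat 1"
  by (subst matrix_eq) (simp add: sum_mv outer_mv flip: orthon_complete[OF assms])



lemma cinner_cont: "continuous_on UNIV (\<lambda>v::complex^'n. cinner u v)"
  unfolding cinner_def by (intro continuous_intros)

lemma quad_cont: "continuous_on S (\<lambda>v::complex^'n::finite. Re (cinner v (A *v v)))"
  unfolding cinner_def matrix_vector_mult_def by (simp, intro continuous_intros)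

lemma cinner_self_norm: "cinner v v = of_real ((norm v)\<^sup>2)"
proof -
  have "(norm v)\<^sup>2 = (\<Sum>i\<in>UNIV. (cmod (v$i))\<^sup>2)"
    unfolding norm_vec_def L2_set_def by (simp add: sum_nonneg)
  then show ?thesis by (simp only: cinner_self)
qed

lemma herm_quad_real: "herm A \<Longrightarrow> cinner v (A *v v) = of_real (Re (cinner v (A *v v)))"
  using herm_cinner[of A v v] cinner_cnj[of v "A *v v"]
  by (metis Reals_cnj_iff complex_is_Real_iff of_real_Re)

lemma quad_scale: "cinner (c *s v) (A *v (c *s v)) = cnj c * c * cinner v (A *v v)"
  by (simp add: mv_scale cinner_scale_left cinner_scale_right)

lemma poly_zero:
  fixes a b :: real
  assumes "\<forall>t. a * t + b * t\<^sup>2 \<le> 0"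
  shows "a = 0"
proof (rule ccontr)
  assume "a \<noteq> 0"
  obtain d where d: "d = \<bar>b\<bar> + 1" by blast
  have d0: "d > 0" "d + b > 0" using d by auto
  define t where "t = a / d"
  have "a * t + b * t\<^sup>2 = a\<^sup>2 * (d + b) / d\<^sup>2"
    unfolding t_def using d0 by (simp add: field_simps power2_eq_square)
  moreover have "a\<^sup>2 * (d + b) / d\<^sup>2 > 0"
    using \<open>a \<noteq> 0\<close> d0 by (intro divide_pos_pos mult_pos_pos) auto
  ultimately show False using assms by (metis not_le)
qed

lemma spectral_aux:
  fixes A :: "complex^'n::finite^'n"
  assumes hA: "herm A"
  shows "m \<le> CARD('n) \<Longrightarrow> \<exists>e \<nu>. orthon e {..<m} \<and> (\<forall>l<m. A *v e l = complex_of_real (\<nu> l) *s e l)"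
proof (induction m)
  case 0
  then show ?case by (auto simp: orthon_def)
next
  case (Suc m)
  then obtain e \<nu> where e: "orthon e {..<m}" and ev: "\<forall>l<m. A *v e l = complex_of_real (\<nu> l) *s e l"
    by auto
  define W where "W = {v::complex^'n. \<forall>l<m. cinner (e l) v = 0}"
  define f where "f = (\<lambda>v::complex^'n. Re (cinner v (A *v v)))"
  have W_eq: "W = (\<Inter>l\<in>{..<m}. {v. cinner (e l) v = 0})" unfolding W_def by auto
  have closedW: "closed W" unfolding W_eq
    by (intro closed_INT ballI closed_Collect_eq cinner_cont continuous_on_const)
  define K where "K = sphere (0::complex^'n) 1 \<inter> W"
  have compK: "compact K" unfolding K_def by (rule compact_Int_closed[OF compact_sphere closedW])
  have W_add: "u + w \<in> W" if "u \<in> W" "w \<in> W" for u w using that by (simp add: W_def cinner_add_right)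
  have W_scale: "c *s u \<in> W" if "u \<in> W" for u c using that by (simp add: W_def cinner_scale_right)
  have K_iff: "v \<in> K \<longleftrightarrow> v \<in> W \<and> cinner v v = 1" for v
  proof -
    have "(complex_of_real (norm v))\<^sup>2 = 1 \<longleftrightarrow> norm v = 1"
    proof -
      have "(complex_of_real (norm v))\<^sup>2 = complex_of_real ((norm v)\<^sup>2)" by simp
      moreover have "(norm v)\<^sup>2 = 1 \<longleftrightarrow> norm v = 1"
        using norm_ge_zero[of v] power2_eq_1_iff[of "norm v"] by linarith
      ultimately show ?thesis by (simp only: of_real_eq_1_iff)
    qed
    then show ?thesis by (auto simp: K_def cinner_self_norm dist_norm)
  qed
  obtain w0 where w0: "cinner w0 w0 = 1" "\<forall>l\<in>{..<m}. cinner (e l) w0 = 0"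
    using orthon_extend[OF e] Suc.prems by auto
  have "K \<noteq> {}" using w0 K_iff[of w0] by (auto simp: W_def)
  then obtain v where vK: "v \<in> K" and vmax: "\<forall>y\<in>K. f y \<le> f v"
    using continuous_attains_sup[OF compK _ quad_cont[of K A]] unfolding f_def by blast
  have vW: "v \<in> W" and vv: "cinner v v = 1" using vK K_iff by auto
  define lam where "lam = f v"
  \<comment> \<open>homogeneity: f u \<le> lam * |u|^2 on W\<close>
  have fle: "f u \<le> lam * Re (cinner u u)" if uW: "u \<in> W" for u
  proof (cases "u = 0")
    case True then show ?thesis by (simp add: f_def)
  next
    case False
    define s where "s = Re (cinner u u)"
    have s: "s > 0" "cinner u u = of_real s" unfolding s_def
      using cinner_self_pos[OF False] cinner_self_real by auto
    define u' where "u' = complex_of_real (1 / sqrt s) *s u"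
    have "cinner u' u' = of_real (1/sqrt s) * of_real (1/sqrt s) * of_real s"
      by (simp add: u'_def cinner_scale_left cinner_scale_right s)
    also have "\<dots> = 1" using s(1) by (simp flip: of_real_mult)
    finally have "u' \<in> K" using K_iff W_scale[OF uW] unfolding u'_def by auto
    then have "f u' \<le> lam" using vmax lam_def by auto
    moreover have "f u' = f u / s"
      using s(1) unfolding f_def u'_def quad_scale
      by (simp flip: of_real_mult)
    ultimately show ?thesis using s(1) unfolding s_def by (simp add: field_simps)
  qed
  have orth0: "cinner w (A *v v) = 0" if wW: "w \<in> W" and wv: "cinner v w = 0" for w
  proof -
    have key: "Re (cinner w (A *v v)) = 0" if wW: "w \<in> W" and wv: "cinner v w = 0" for w
    proof -
      define a where "a = Re (cinner w (A *v v))"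
      define c where "c = Re (cinner w w)"
      have "\<forall>t. (2 * a) * t + (f w - lam * c) * t\<^sup>2 \<le> 0"
      proof
        fix t :: real
        define u where "u = v + complex_of_real t *s w"
        have uW: "u \<in> W" unfolding u_def by (intro W_add vW W_scale wW)
        have wv': "cinner w v = 0" using wv cinner_cnj[of v w] by simp
        have cu: "cinner u u = 1 + of_real (t\<^sup>2) * cinner w w"
          unfolding u_def by (simp add: cinner_simps wv wv' vv power2_eq_square)
        have r1: "Re (cinner v (A *v w)) = a"
          using herm_cinner[OF hA, of v w] cinner_cnj[of w "A *v v"] unfolding a_def by (metis cnj.sel(1))
        have "f u = f v + t * Re (cinner v (A *v w)) + t * a + t\<^sup>2 * f w"
          unfolding u_def f_def a_def
          by (simp add: mv_add mv_scale cinner_simps power2_eq_square algebra_simps)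
        then have "f u = lam + 2 * a * t + t\<^sup>2 * f w" using r1 lam_def by simp
        moreover have "Re (cinner u u) = 1 + t\<^sup>2 * c" using cu unfolding c_def by simp
        ultimately show "(2 * a) * t + (f w - lam * c) * t\<^sup>2 \<le> 0"
          using fle[OF uW] by (simp add: algebra_simps)
      qed
      then have "2 * a = 0" by (rule poly_zero)
      then show ?thesis unfolding a_def by simp
    qed
    have "Re (cinner w (A *v v)) = 0" by (rule key[OF wW wv])
    moreover have "Re (cinner (\<i> *s w) (A *v v)) = 0"
      by (rule key) (use wW wv W_scale in \<open>auto simp: cinner_scale_right\<close>)
    ultimately show ?thesis by (simp add: cinner_scale_left complex_eq_iff)
  qed
  define \<mu> where "\<mu> = cinner v (A *v v)"
  have \<mu>real: "\<mu> = of_real (Re \<mu>)" unfolding \<mu>_def by (rule herm_quad_real[OF hA])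
  define r where "r = A *v v - \<mu> *s v"
  have eAv: "cinner (e l) (A *v v) = 0" if "l < m" for l
  proof -
    have "cinner (e l) (A *v v) = cinner (A *v e l) v" by (rule herm_cinner[OF hA])
    also have "\<dots> = 0" using ev that vW by (simp add: W_def cinner_scale_left)
    finally show ?thesis .
  qed
  have rW: "r \<in> W" using eAv vW by (simp add: W_def r_def cinner_simps)
  have rv: "cinner v r = 0" by (simp add: r_def cinner_simps vv \<mu>_def)
  have "cinner r (A *v v) = 0" by (rule orth0[OF rW rv])
  moreover have "cinner r v = 0" using rv cinner_cnj[of v r] by simp
  ultimately have "cinner r r = 0" by (simp add: r_def[of] cinner_diff_right cinner_scale_right)
  then have "r = 0" by (simp add: cinner_self_eq_0)
  then have Av: "A *v v = complex_of_real (Re \<mu>) *s v" using \<mu>real unfolding r_def by simp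
  define e' where "e' = e(m := v)"
  define \<nu>' where "\<nu>' = \<nu>(m := Re \<mu>)"
  have "orthon e' {..<Suc m}"
    using e vW vv unfolding orthon_def e'_def W_def
    by (auto simp: less_Suc_eq cinner_cnj[symmetric, of v "e _"])
  moreover have "\<forall>l<Suc m. A *v e' l = complex_of_real (\<nu>' l) *s e' l"
    using ev Av by (auto simp: e'_def \<nu>'_def less_Suc_eq)
  ultimately show ?case by blast
qed

lemma spectral:
  fixes A :: "complex^'n::finite^'n"
  assumes "herm A"
  shows "\<exists>e \<nu>. orthon e {..<CARD('n)} \<and> (\<forall>l<CARD('n). A *v e l = complex_of_real (\<nu> l) *s e l)"
  using spectral_aux[OF assms, of "CARD('n)"] by simp



lemma cnj_mult_self: "cnj z * z = complex_of_real ((cmod z)\<^sup>2)"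
  by (metis complex_mult_cnj complex_norm_square mult.commute)

definition diagm :: "('i \<Rightarrow> complex^'n) \<Rightarrow> 'i set \<Rightarrow> ('i \<Rightarrow> real) \<Rightarrow> complex^'n^'n" where
  "diagm e L c = (\<Sum>l\<in>L. c l *\<^sub>R outer (e l) (e l))"

lemma diagm_mv: "diagm e L c *v v = (\<Sum>l\<in>L. (complex_of_real (c l) * cinner (e l) v) *s e l)"
  by (simp add: diagm_def sum_mv scaleR_mv outer_mv vector_smult_assoc)

lemma diagm_mv_e:
  assumes "orthon e L" "finite L" "m \<in> L"
  shows "diagm e L c *v e m = complex_of_real (c m) *s e m"
proof -
  have "(\<Sum>l\<in>L. (complex_of_real (c l) * cinner (e l) (e m)) *s e l)
      = (\<Sum>l\<in>L. if l = m then complex_of_real (c m) *s e m else 0)"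
    using assms by (intro sum.cong) (auto simp: orthon_def)
  then show ?thesis using assms by (simp add: diagm_mv sum.delta')
qed

lemma diagm_quad: "cinner v (diagm e L c *v v) = complex_of_real (\<Sum>l\<in>L. c l * (cmod (cinner (e l) v))\<^sup>2)"
proof -
  have "cinner v (diagm e L c *v v) = (\<Sum>l\<in>L. complex_of_real (c l) * (cnj (cinner (e l) v) * cinner (e l) v))"
    unfolding diagm_mv cinner_sum_right cinner_scale_right
    by (intro sum.cong refl) (simp add: cinner_cnj[of "e _" v, symmetric])
  also have "\<dots> = (\<Sum>l\<in>L. complex_of_real (c l * (cmod (cinner (e l) v))\<^sup>2))"
    by (intro sum.cong refl) (simp add: cnj_mult_self)
  finally show ?thesis by simp
qed

lemma diagm_psd: "(\<And>l. l \<in> L \<Longrightarrow> c l \<ge> 0) \<Longrightarrow> psd (diagm e L c)"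
  unfolding psd_def diagm_quad by (auto intro!: sum_nonneg)

lemma diagm_mult:
  assumes "orthon e L" "finite L"
  shows "diagm e L c ** diagm e L d = diagm e L (\<lambda>l. c l * d l)"
proof (subst matrix_eq, intro allI)
  fix v
  have "(diagm e L c ** diagm e L d) *v v = diagm e L c *v (diagm e L d *v v)"
    by (simp add: matrix_vector_mul_assoc)
  also have "\<dots> = (\<Sum>l\<in>L. (complex_of_real (d l) * cinner (e l) v) *s (complex_of_real (c l) *s e l))"
    by (simp add: diagm_mv[of e L d] mv_sum mv_scale diagm_mv_e[OF assms])
  also have "\<dots> = diagm e L (\<lambda>l. c l * d l) *v v"
    by (simp add: diagm_mv vector_smult_assoc ac_simps)
  finally show "(diagm e L c ** diagm e L d) *v v = diagm e L (\<lambda>l. c l * d l) *v v" .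
qed

lemma mtrace_add: "mtrace (A + B) = mtrace A + mtrace B"
  by (simp add: mtrace_def sum.distrib)
lemma mtrace_sum: "mtrace (sum f S) = (\<Sum>x\<in>S. mtrace (f x))"
  by (simp add: mtrace_def sum_component) (rule sum.swap)
lemma mtrace_scaleR: "mtrace (r *\<^sub>R A) = complex_of_real r * mtrace A"
  unfolding mtrace_def scaleR_mat_comp by (simp add: sum_distrib_left)
lemma mtrace_outer: "mtrace (outer u v) = cinner v u"
  by (simp add: mtrace_def outer_def cinner_def ac_simps)

lemma diagm_trace:
  assumes "orthon e L"
  shows "mtrace (diagm e L c) = complex_of_real (sum c L)"
  using assms by (simp add: diagm_def mtrace_sum mtrace_scaleR mtrace_outer orthon_def)

lemma spec_diag:
  fixes A :: "complex^'n::finite^'n"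
  assumes "herm A"
  shows "\<exists>e \<nu>. orthon e {..<CARD('n)} \<and> A = diagm e {..<CARD('n)} \<nu>"
proof -
  obtain e \<nu> where e: "orthon e {..<CARD('n)}"
    and ev: "\<forall>l<CARD('n). A *v e l = complex_of_real (\<nu> l) *s e l"
    using spectral[OF assms] by blast
  have "A = diagm e {..<CARD('n)} \<nu>"
  proof (subst matrix_eq, intro allI)
    fix v
    have "A *v v = A *v (\<Sum>l<CARD('n). cinner (e l) v *s e l)"
      using orthon_complete[OF e, of v] by simp
    also have "\<dots> = diagm e {..<CARD('n)} \<nu> *v v"
      by (simp add: mv_sum mv_scale ev diagm_mv vector_smult_assoc ac_simps)
    finally show "A *v v = diagm e {..<CARD('n)} \<nu> *v v" .
  qed
  with e show ?thesis by blast
qed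

lemma psd_diag_nonneg:
  assumes "psd (diagm e L \<nu>)" "orthon e L" "finite L" "m \<in> L"
  shows "\<nu> m \<ge> 0"
proof -
  have "cinner (e m) (diagm e L \<nu> *v e m) = complex_of_real (\<nu> m)"
    using assms(2-4) by (simp add: diagm_mv_e cinner_scale_right orthon_def)
  then show ?thesis using assms(1) unfolding psd_def by (metis Re_complex_of_real)
qed

lemma psd_spec:
  fixes A :: "complex^'n::finite^'n"
  assumes "psd A"
  shows "\<exists>e \<nu>. orthon e {..<CARD('n)} \<and> A = diagm e {..<CARD('n)} \<nu> \<and> (\<forall>l. \<nu> l \<ge> 0)"
proof -
  obtain e \<nu> where e: "orthon e {..<CARD('n)}" and A: "A = diagm e {..<CARD('n)} \<nu>"
    using spec_diag[OF psd_herm[OF assms]] by blast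
  define \<nu>' where "\<nu>' l = (if l < CARD('n) then \<nu> l else 0)" for l
  have "diagm e {..<CARD('n)} \<nu>' = diagm e {..<CARD('n)} \<nu>"
    unfolding diagm_def by (intro sum.cong) (auto simp: \<nu>'_def)
  moreover have "\<forall>l. \<nu>' l \<ge> 0"
  proof -
    have pd: "psd (diagm e {..<CARD('n)} \<nu>)" using assms A by simp
    show ?thesis by (auto simp: \<nu>'_def intro!: psd_diag_nonneg[OF pd e])
  qed
  ultimately show ?thesis using e A by metis
qed

lemma sqrt_unique_diag:
  fixes B :: "complex^'n::finite^'n"
  assumes B: "psd B" and BB: "B ** B = diagm e {..<CARD('n)} \<nu>"
    and e: "orthon e {..<CARD('n)}" and nn: "\<forall>l. \<nu> l \<ge> 0"
  shows "B = diagm e {..<CARD('n)} (\<lambda>l. sqrt (\<nu> l))"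
proof -
  have hB: "herm B" by (rule psd_herm[OF B])
  have Be: "B *v e m = complex_of_real (sqrt (\<nu> m)) *s e m" if m: "m < CARD('n)" for m
  proof -
    define v where "v = e m"
    have Av: "B *v (B *v v) = complex_of_real (\<nu> m) *s v"
      using diagm_mv_e[OF e _ , of m \<nu>] m by (simp add: matrix_vector_mul_assoc BB v_def)
    show ?thesis
    proof (cases "\<nu> m = 0")
      case True
      have "cinner (B *v v) (B *v v) = cinner v (B *v (B *v v))" by (simp add: herm_cinner[OF hB])
      also have "\<dots> = 0" using Av True by simp
      finally have "B *v v = 0" by (simp add: cinner_self_eq_0)
      then show ?thesis using True v_def by simp
    next
      case False
      then have pos: "\<nu> m > 0" using nn by (metis less_eq_real_def)
      define s where "s = sqrt (\<nu> m)"
      have s: "s > 0" "s * s = \<nu> m" using pos unfolding s_def by auto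
      define u where "u = B *v v - complex_of_real s *s v"
      have "B *v u + complex_of_real s *s u = B *v (B *v v) - complex_of_real (s * s) *s v"
        unfolding u_def by (simp add: mv_diff mv_scale algebra_simps vector_smult_assoc vector_ssub_ldistrib)
      also have "\<dots> = 0" using Av s by simp
      finally have "B *v u + complex_of_real s *s u = 0" .
      then have "cinner u (B *v u) + complex_of_real s * cinner u u = 0"
        by (metis cinner_add_right cinner_scale_right cinner_zero_right)
      then have "Re (cinner u (B *v u)) + s * Re (cinner u u) = 0"
      proof -
        assume h: "cinner u (B *v u) + complex_of_real s * cinner u u = 0"
        have "Re (cinner u (B *v u) + complex_of_real s * cinner u u) = 0" by (simp only: h zero_complex.sel)
        then show ?thesis by simp
      qed
      moreover have "Re (cinner u (B *v u)) \<ge> 0" using B by (simp add: psd_def)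
      moreover have "Re (cinner u u) \<ge> 0" by (rule cinner_self_nonneg)
      moreover have "s * Re (cinner u u) \<ge> 0" using s(1) cinner_self_nonneg[of u] by simp
      ultimately have "s * Re (cinner u u) = 0" by linarith
      then have "Re (cinner u u) = 0" using s by simp
      then have "cinner u u = 0" using cinner_self_real[of u] by simp
      then have "u = 0" by (simp add: cinner_self_eq_0)
      then show ?thesis unfolding u_def v_def s_def by simp
    qed
  qed
  show ?thesis
  proof (subst matrix_eq, intro allI)
    fix v
    have "B *v v = B *v (\<Sum>l<CARD('n). cinner (e l) v *s e l)"
      using orthon_complete[OF e, of v] by simp
    also have "\<dots> = diagm e {..<CARD('n)} (\<lambda>l. sqrt (\<nu> l)) *v v"
      by (simp add: mv_sum mv_scale Be diagm_mv vector_smult_assoc ac_simps)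
    finally show "B *v v = diagm e {..<CARD('n)} (\<lambda>l. sqrt (\<nu> l)) *v v" .
  qed
qed

lemma psd_sqrt_exists:
  fixes A :: "complex^'n::finite^'n"
  assumes "psd A"
  shows "\<exists>B. psd B \<and> B ** B = A"
proof -
  obtain e \<nu> where e: "orthon e {..<CARD('n)}" and A: "A = diagm e {..<CARD('n)} \<nu>" and nn: "\<forall>l. \<nu> l \<ge> 0"
    using psd_spec[OF assms] by blast
  let ?B = "diagm e {..<CARD('n)} (\<lambda>l. sqrt (\<nu> l))"
  have "psd ?B" by (rule diagm_psd) (use nn in simp)
  moreover have "?B ** ?B = A" unfolding A diagm_mult[OF e finite_lessThan]
    using nn by (simp add: real_sqrt_mult[symmetric])
  ultimately show ?thesis by blast
qed

lemma psd_sqrt_unique: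
  fixes A :: "complex^'n::finite^'n"
  assumes "psd B" "B ** B = A" "psd C" "C ** C = A"
  shows "B = C"
proof -
  have "psd A"
  proof -
    have "cinner v (A *v v) = cinner (B *v v) (B *v v)" for v
      using herm_cinner[OF psd_herm[OF assms(1)]] assms(2) by (metis matrix_vector_mul_assoc)
    then show ?thesis unfolding psd_def by (metis cinner_self_nonneg cinner_self_Im)
  qed
  then obtain e \<nu> where e: "orthon e {..<CARD('n)}" and A: "A = diagm e {..<CARD('n)} \<nu>" and nn: "\<forall>l. \<nu> l \<ge> 0"
    using psd_spec by blast
  show ?thesis using sqrt_unique_diag[OF assms(1) _ e nn] sqrt_unique_diag[OF assms(3) _ e nn] assms A by simp
qed

lemma msqrt_eqI:
  fixes A :: "complex^'n::finite^'n"
  assumes "psd B" "B ** B = A"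
  shows "msqrt A = B"
  unfolding msqrt_def
  by (rule the_equality) (use assms psd_sqrt_unique in blast)+

lemma msqrt_props:
  fixes A :: "complex^'n::finite^'n"
  assumes "psd A"
  shows "psd (msqrt A) \<and> msqrt A ** msqrt A = A"
  using psd_sqrt_exists[OF assms] msqrt_eqI by metis

lemma msqrt_diagm:
  fixes e :: "'i \<Rightarrow> complex^'n::finite"
  assumes "orthon e L" "finite L" "\<And>l. l \<in> L \<Longrightarrow> c l \<ge> 0"
  shows "msqrt (diagm e L c) = diagm e L (\<lambda>l. sqrt (c l))"
proof (rule msqrt_eqI)
  show "psd (diagm e L (\<lambda>l. sqrt (c l)))" by (rule diagm_psd) (use assms in auto)
  have "diagm e L (\<lambda>l. sqrt (c l) * sqrt (c l)) = diagm e L c"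
    unfolding diagm_def by (intro sum.cong) (use assms in \<open>auto simp: real_sqrt_mult[symmetric]\<close>)
  then show "diagm e L (\<lambda>l. sqrt (c l)) ** diagm e L (\<lambda>l. sqrt (c l)) = diagm e L c"
    by (simp add: diagm_mult[OF assms(1,2)])
qed

lemma density_bounds:
  fixes R :: "complex^'n::finite^'n"
  assumes "density R"
  shows "Re (cinner w (R *v w)) \<le> Re (cinner w w)"
    and "Re (cinner w (msqrt R *v w)) \<le> Re (cinner w w)"
    and "Re (cinner w (msqrt R *v w)) \<ge> 0"
proof -
  have pR: "psd R" and tR: "mtrace R = 1" using assms by (auto simp: density_def)
  obtain e \<nu> where e: "orthon e {..<CARD('n)}" and A: "R = diagm e {..<CARD('n)} \<nu>" and nn: "\<forall>l. \<nu> l \<ge> 0"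
    using psd_spec[OF pR] by blast
  have "complex_of_real (sum \<nu> {..<CARD('n)}) = 1" using tR diagm_trace[OF e, of \<nu>] A by simp
  then have s1: "sum \<nu> {..<CARD('n)} = 1" by (simp only: of_real_eq_1_iff)
  have le1: "\<nu> l \<le> 1" if "l < CARD('n)" for l
  proof -
    have "\<nu> l \<le> sum \<nu> {..<CARD('n)}"
      using that nn by (intro member_le_sum) auto
    then show ?thesis using s1 by simp
  qed
  have pars: "Re (cinner w w) = (\<Sum>l<CARD('n). (cmod (cinner (e l) w))\<^sup>2)"
  proof -
    have "cinner w w = (\<Sum>l<CARD('n). complex_of_real ((cmod (cinner (e l) w))\<^sup>2))"
      using orthon_parseval[OF e, of w w] by (simp add: cnj_mult_self)
    then show ?thesis by (simp add: Re_sum)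
  qed
  have bnd: "Re (cinner w (diagm e {..<CARD('n)} d *v w)) \<le> Re (cinner w w)"
    if "\<And>l. l < CARD('n) \<Longrightarrow> d l \<le> 1" for d
  proof -
    have "Re (cinner w (diagm e {..<CARD('n)} d *v w)) = (\<Sum>l<CARD('n). d l * (cmod (cinner (e l) w))\<^sup>2)"
      by (simp add: diagm_quad)
    also have "\<dots> \<le> (\<Sum>l<CARD('n). (cmod (cinner (e l) w))\<^sup>2)"
    proof (intro sum_mono)
      fix l assume "l \<in> {..<CARD('n)}"
      then show "d l * (cmod (cinner (e l) w))\<^sup>2 \<le> (cmod (cinner (e l) w))\<^sup>2"
        using that[of l] mult_right_mono[of "d l" 1 "(cmod (cinner (e l) w))\<^sup>2"] by simp
    qed
    finally show ?thesis using pars by simp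
  qed
  show "Re (cinner w (R *v w)) \<le> Re (cinner w w)" unfolding A by (rule bnd) (rule le1)
  have ms: "msqrt R = diagm e {..<CARD('n)} (\<lambda>l. sqrt (\<nu> l))"
    unfolding A by (rule msqrt_diagm[OF e]) (use nn in auto)
  show "Re (cinner w (msqrt R *v w)) \<le> Re (cinner w w)" unfolding ms
    by (rule bnd) (use le1 in auto)
  show "Re (cinner w (msqrt R *v w)) \<ge> 0" using msqrt_props[OF pR] by (simp add: psd_def)
qed



lemma sum_pair_univ: "(\<Sum>p\<in>(UNIV::('a::finite \<times> 'b::finite) set). f p) = (\<Sum>a\<in>UNIV. \<Sum>b\<in>UNIV. f (a, b))"
proof -
  have "(\<Sum>a\<in>UNIV. \<Sum>b\<in>UNIV. f (a, b)) = (\<Sum>(a,b)\<in>UNIV \<times> UNIV. f (a, b))"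
    by (rule sum.cartesian_product)
  then show ?thesis by simp
qed

definition pin :: "complex^'a \<Rightarrow> complex^('a::finite \<times> 'b::finite) \<Rightarrow> complex^'b" where
  "pin u v = (\<chi> b. \<Sum>a\<in>UNIV. cnj (u$a) * v$(a, b))"

lemma pin_add: "pin u (v + w) = pin u v + pin u w"
  by (simp add: pin_def vec_eq_iff distrib_left sum.distrib)
lemma pin_scale: "pin u (c *s v) = c *s pin u v"
  by (simp add: pin_def vec_eq_iff sum_distrib_left ac_simps)
lemma pin_sum: "pin u (sum f S) = (\<Sum>x\<in>S. pin u (f x))"
  apply (simp add: pin_def vec_eq_iff sum_component sum_distrib_left)
  apply (rule allI, rule sum.swap) done
lemma pin_tensor: "pin u (tensor_vec x y) = cinner u x *s y"
  by (simp add: pin_def tensor_vec_def vec_eq_iff cinner_def sum_distrib_right sum_distrib_left ac_simps)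

lemma cinner_tensor: "cinner v (tensor_vec u w) = cinner (pin u v) w"
proof -
  have "cinner v (tensor_vec u w) = (\<Sum>a\<in>UNIV. \<Sum>b\<in>UNIV. cnj (v$(a,b)) * (u$a * w$b))"
    by (simp add: cinner_def tensor_vec_def sum_pair_univ)
  also have "\<dots> = (\<Sum>b\<in>UNIV. \<Sum>a\<in>UNIV. cnj (v$(a,b)) * (u$a * w$b))" by (rule sum.swap)
  also have "\<dots> = cinner (pin u v) w"
    by (simp add: cinner_def pin_def sum_distrib_right sum_distrib_left ac_simps)
  finally show ?thesis .
qed

lemma cinner_tensor2: "cinner (tensor_vec x y) (tensor_vec x' y') = cinner x x' * cinner y y'"
  by (simp add: cinner_tensor pin_tensor cinner_scale_left cinner_cnj)

lemma tensor_mat_mv: "tensor_mat (outer u u) R *v v = tensor_vec u (R *v pin u v)"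
proof -
  have "(tensor_mat (outer u u) R *v v) $ (a, b) = (tensor_vec u (R *v pin u v)) $ (a, b)" for a b
  proof -
    have "(tensor_mat (outer u u) R *v v) $ (a, b)
        = (\<Sum>a'\<in>UNIV. \<Sum>b'\<in>UNIV. u$a * cnj (u$a') * R$b$b' * v$(a',b'))"
      by (simp add: matrix_vector_mult_def tensor_mat_def outer_def sum_pair_univ)
    also have "\<dots> = (\<Sum>b'\<in>UNIV. \<Sum>a'\<in>UNIV. u$a * cnj (u$a') * R$b$b' * v$(a',b'))"
      by (rule sum.swap)
    also have "\<dots> = (tensor_vec u (R *v pin u v)) $ (a, b)"
      by (simp add: tensor_vec_def matrix_vector_mult_def pin_def sum_distrib_left ac_simps)
    finally show ?thesis .
  qed
  then show ?thesis by (simp add: vec_eq_iff)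
qed

lemma tensor_vec_add2: "tensor_vec u (w + w') = tensor_vec u w + tensor_vec u w'"
  by (simp add: tensor_vec_def vec_eq_iff distrib_left)
lemma tensor_vec_scale2: "tensor_vec u (c *s w) = c *s tensor_vec u w"
  by (simp add: tensor_vec_def vec_eq_iff ac_simps)
lemma tensor_vec_scale1: "tensor_vec (c *s u) w = c *s tensor_vec u w"
  by (simp add: tensor_vec_def vec_eq_iff ac_simps)

lemma tensor_outer: "tensor_mat (outer x x) (outer y y) = outer (tensor_vec x y) (tensor_vec x y)"
  by (simp add: tensor_mat_def outer_def tensor_vec_def vec_eq_iff ac_simps)

definition cqm :: "('a \<Rightarrow> complex^'a) \<Rightarrow> ('a \<Rightarrow> real) \<Rightarrow> ('a \<Rightarrow> complex^'b^'b)
    \<Rightarrow> complex^('a::finite \<times> 'b::finite)^('a \<times> 'b)" where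
  "cqm \<alpha> c M = (\<Sum>a\<in>UNIV. c a *\<^sub>R tensor_mat (outer (\<alpha> a) (\<alpha> a)) (M a))"

lemma cqm_mv: "cqm \<alpha> c M *v v = (\<Sum>a\<in>UNIV. complex_of_real (c a) *s tensor_vec (\<alpha> a) (M a *v pin (\<alpha> a) v))"
  by (simp add: cqm_def sum_mv scaleR_mv tensor_mat_mv)

lemma cqm_quad: "cinner v (cqm \<alpha> c M *v v) = (\<Sum>a\<in>UNIV. complex_of_real (c a) * cinner (pin (\<alpha> a) v) (M a *v pin (\<alpha> a) v))"
  by (simp add: cqm_mv cinner_sum_right cinner_scale_right cinner_tensor)

lemma pin_cqm:
  assumes "orthon \<alpha> UNIV"
  shows "pin (\<alpha> b) (cqm \<alpha> c M *v v) = complex_of_real (c b) *s (M b *v pin (\<alpha> b) v)"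
proof -
  have "pin (\<alpha> b) (cqm \<alpha> c M *v v) = (\<Sum>a\<in>UNIV. (complex_of_real (c a) * cinner (\<alpha> b) (\<alpha> a)) *s (M a *v pin (\<alpha> a) v))"
    by (simp add: cqm_mv pin_sum pin_scale pin_tensor vector_smult_assoc)
  also have "\<dots> = (\<Sum>a\<in>UNIV. if a = b then complex_of_real (c b) *s (M b *v pin (\<alpha> b) v) else 0)"
    using assms by (intro sum.cong) (auto simp: orthon_def)
  finally show ?thesis by simp
qed

lemma cqm_mult:
  assumes "orthon \<alpha> UNIV"
  shows "cqm \<alpha> c M ** cqm \<alpha> d N = cqm \<alpha> (\<lambda>a. c a * d a) (\<lambda>a. M a ** N a)"
proof (subst matrix_eq, intro allI)
  fix v
  have "(cqm \<alpha> c M ** cqm \<alpha> d N) *v v = cqm \<alpha> c M *v (cqm \<alpha> d N *v v)"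
    by (simp add: matrix_vector_mul_assoc)
  also have "\<dots> = cqm \<alpha> (\<lambda>a. c a * d a) (\<lambda>a. M a ** N a) *v v"
    unfolding cqm_mv[of \<alpha> c M] pin_cqm[OF assms]
    by (simp add: cqm_mv mv_scale tensor_vec_scale2 vector_smult_assoc matrix_vector_mul_assoc)
  finally show "(cqm \<alpha> c M ** cqm \<alpha> d N) *v v = cqm \<alpha> (\<lambda>a. c a * d a) (\<lambda>a. M a ** N a) *v v" .
qed

lemma cqm_psd:
  assumes "\<And>a. c a \<ge> 0" "\<And>a. psd (M a)"
  shows "psd (cqm \<alpha> c M)"
  unfolding psd_def cqm_quad
proof
  fix v
  have h: "Im (cinner (pin (\<alpha> a) v) (M a *v pin (\<alpha> a) v)) = 0 \<and> Re (cinner (pin (\<alpha> a) v) (M a *v pin (\<alpha> a) v)) \<ge> 0" for a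
    using assms(2)[of a] by (simp add: psd_def)
  show "Im (\<Sum>a\<in>UNIV. complex_of_real (c a) * cinner (pin (\<alpha> a) v) (M a *v pin (\<alpha> a) v)) = 0 \<and>
        0 \<le> Re (\<Sum>a\<in>UNIV. complex_of_real (c a) * cinner (pin (\<alpha> a) v) (M a *v pin (\<alpha> a) v))"
    using h assms(1) by (simp add: Im_sum Re_sum sum_nonneg)
qed

lemma cqm_msqrt:
  assumes "orthon \<alpha> UNIV" "\<And>a. c a \<ge> 0" "\<And>a. density (M a)"
  shows "msqrt (cqm \<alpha> c M) = cqm \<alpha> (\<lambda>a. sqrt (c a)) (\<lambda>a. msqrt (M a))"
proof (rule msqrt_eqI)
  have ps: "psd (M a)" for a using assms(3) by (simp add: density_def)
  show "psd (cqm \<alpha> (\<lambda>a. sqrt (c a)) (\<lambda>a. msqrt (M a)))"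
    by (rule cqm_psd) (use msqrt_props[OF ps] assms(2) in auto)
  show "cqm \<alpha> (\<lambda>a. sqrt (c a)) (\<lambda>a. msqrt (M a)) ** cqm \<alpha> (\<lambda>a. sqrt (c a)) (\<lambda>a. msqrt (M a)) = cqm \<alpha> c M"
    unfolding cqm_mult[OF assms(1)] using msqrt_props[OF ps] assms(2)
    by (simp add: real_sqrt_mult[symmetric])
qed

lemma cq_states_cqm: "\<sigma> \<in> cq_states \<alpha> \<longleftrightarrow> (\<exists>p \<sigma>s. (\<forall>i. p i \<ge> 0) \<and> sum p UNIV = 1 \<and> (\<forall>i. density (\<sigma>s i)) \<and> \<sigma> = cqm \<alpha> p \<sigma>s)"
  by (simp add: cq_states_def cqm_def)

lemma outer_mult_left: "M ** outer u v = outer (M *v u) v"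
  by (simp add: outer_def matrix_matrix_mult_def matrix_vector_mult_def vec_eq_iff sum_distrib_right sum_distrib_left ac_simps)
lemma outer_mult_right: "outer u v ** M = outer u (adj M *v v)"
  by (simp add: outer_def matrix_matrix_mult_def matrix_vector_mult_def adj_def vec_eq_iff sum_distrib_left ac_simps)

lemma mtrace_outer_mult: "mtrace (outer u v ** M) = cinner v (M *v u)"
  by (simp add: outer_mult_right mtrace_outer cinner_adj)

lemma outer_psd: "psd (outer u u)"
  unfolding psd_def outer_mv cinner_scale_right
  by (simp add: cinner_cnj[of u, symmetric] mult.commute[of "cnj _"] flip: cnj_mult_self[simplified mult.commute])



lemma mat_eq_cinner:
  fixes M N :: "complex^'n::finite^'m::finite"
  assumes "\<And>u v. cinner u (M *v v) = cinner u (N *v v)"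
  shows "M = N"
proof -
  have "M$i$j = N$i$j" for i j
    using assms[of "axis i 1" "axis j 1"] by (simp add: cinner_axis_left mv_axis)
  then show ?thesis by (simp add: vec_eq_iff)
qed

lemma ptrace_outer_cinner:
  fixes \<psi> :: "complex^('a::finite \<times> 'b::finite)"
  shows "cinner u (ptrace_b (outer \<psi> \<psi>) *v u') = cinner (pin u' \<psi>) (pin u \<psi>)"
proof -
  have "cinner u (ptrace_b (outer \<psi> \<psi>) *v u')
      = (\<Sum>i\<in>UNIV. \<Sum>i'\<in>UNIV. \<Sum>j\<in>UNIV. cnj (u$i) * (\<psi>$(i,j) * cnj (\<psi>$(i',j)) * u'$i'))"
    by (simp add: cinner_def matrix_vector_mult_def ptrace_b_def outer_def sum_distrib_left sum_distrib_right)
  also have "\<dots> = (\<Sum>i\<in>UNIV. \<Sum>j\<in>UNIV. \<Sum>i'\<in>UNIV. cnj (u$i) * (\<psi>$(i,j) * cnj (\<psi>$(i',j)) * u'$i'))"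
    by (intro sum.cong refl sum.swap)
  also have "\<dots> = (\<Sum>j\<in>UNIV. \<Sum>i\<in>UNIV. \<Sum>i'\<in>UNIV. cnj (u$i) * (\<psi>$(i,j) * cnj (\<psi>$(i',j)) * u'$i'))"
    by (rule sum.swap)
  also have "\<dots> = cinner (pin u' \<psi>) (pin u \<psi>)"
    by (simp add: cinner_def pin_def sum_distrib_left sum_distrib_right cnj_sum ac_simps)
  finally show ?thesis .
qed

lemma cinner_combo:
  assumes "orthon e L" "finite L"
  shows "cinner (\<Sum>l\<in>L. c l *s e l) (\<Sum>l\<in>L. d l *s e l) = (\<Sum>l\<in>L. cnj (c l) * d l)"
  by (simp add: cinner_sum_left cinner_scale_left cinner_expand[OF assms])

lemma mult_cnj_self: "z * cnj z = (complex_of_real (cmod z))\<^sup>2"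
  by (simp only: complex_norm_square[symmetric] of_real_power)

lemma bessel:
  assumes "orthon e L" "finite L"
  shows "(\<Sum>l\<in>L. (cmod (cinner (e l) v))\<^sup>2) \<le> Re (cinner v v)"
proof -
  define r where "r = v - (\<Sum>l\<in>L. cinner (e l) v *s e l)"
  have c1: "cinner v (\<Sum>l\<in>L. cinner (e l) v *s e l) = (\<Sum>l\<in>L. complex_of_real ((cmod (cinner (e l) v))\<^sup>2))"
    by (simp add: cinner_sum_right cinner_scale_right cinner_cnj[of "e _" v, symmetric] mult_cnj_self)
  have c2: "cinner (\<Sum>l\<in>L. cinner (e l) v *s e l) v = (\<Sum>l\<in>L. complex_of_real ((cmod (cinner (e l) v))\<^sup>2))"
    by (simp add: cinner_sum_left cinner_scale_left cnj_mult_self)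
  have c3: "cinner (\<Sum>l\<in>L. cinner (e l) v *s e l) (\<Sum>l\<in>L. cinner (e l) v *s e l) = (\<Sum>l\<in>L. complex_of_real ((cmod (cinner (e l) v))\<^sup>2))"
    by (simp add: cinner_combo[OF assms] cnj_mult_self)
  have "cinner r r = cinner v v - (\<Sum>l\<in>L. complex_of_real ((cmod (cinner (e l) v))\<^sup>2))"
    unfolding r_def cinner_diff_left cinner_diff_right c1 c2 c3 by simp
  then have "Re (cinner r r) = Re (cinner v v) - (\<Sum>l\<in>L. (cmod (cinner (e l) v))\<^sup>2)"
    by (simp add: Re_sum)
  with cinner_self_nonneg[of r] show ?thesis by simp
qed

lemma outer_zero[simp]: "outer 0 0 = 0"
  by (simp add: outer_def vec_eq_iff)

lemma msqrt_zero: "msqrt (0::complex^'n::finite^'n) = 0"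
  by (rule msqrt_eqI) (auto simp: psd_def)

lemma outer_scale: "outer (c *s u) (c *s u) = (cmod c)\<^sup>2 *\<^sub>R outer u u"
  by (simp add: vec_eq_iff outer_def vector_scaleR_component) (simp add: scaleR_conv_of_real mult_cnj_self[symmetric] ac_simps)

lemma trace_msqrt_rank1:
  fixes \<phi> :: "complex^'n::finite"
  shows "mtrace (msqrt (outer \<phi> \<phi>)) = complex_of_real (sqrt (Re (cinner \<phi> \<phi>)))"
proof (cases "\<phi> = 0")
  case True then show ?thesis by (simp add: msqrt_zero mtrace_def)
next
  case False
  define N where "N = Re (cinner \<phi> \<phi>)"
  have N: "N > 0" "cinner \<phi> \<phi> = of_real N" unfolding N_def using cinner_self_pos[OF False] cinner_self_real by auto
  define u where "u = complex_of_real (1 / sqrt N) *s \<phi>"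
  have uu: "cinner u u = 1" using N by (simp add: u_def cinner_scale_left cinner_scale_right flip: of_real_mult)
  have o: "orthon (\<lambda>_::nat. u) {0}" using uu by (simp add: orthon_def)
  have od: "outer \<phi> \<phi> = diagm (\<lambda>_. u) {0::nat} (\<lambda>_. N)"
  proof -
    have "\<phi> = complex_of_real (sqrt N) *s u" using N by (simp add: u_def vector_smult_assoc flip: of_real_mult)
    then have "outer \<phi> \<phi> = (cmod (complex_of_real (sqrt N)))\<^sup>2 *\<^sub>R outer u u" by (metis outer_scale)
    then show ?thesis using N by (simp add: diagm_def)
  qed
  have "msqrt (diagm (\<lambda>_. u) {0::nat} (\<lambda>_. N)) = diagm (\<lambda>_. u) {0::nat} (\<lambda>_. sqrt N)"
    by (rule msqrt_diagm[OF o]) (use N in simp_all)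
  then have "msqrt (outer \<phi> \<phi>) = diagm (\<lambda>_. u) {0::nat} (\<lambda>_. sqrt N)" using od by simp
  then show ?thesis using diagm_trace[OF o] N_def by simp
qed

lemma fidelity_pure:
  fixes \<psi> :: "complex^'n::finite"
  assumes "psd \<sigma>"
  shows "fidelity (outer \<psi> \<psi>) \<sigma> = sqrt (Re (cinner \<psi> (\<sigma> *v \<psi>)))"
proof -
  define S where "S = msqrt \<sigma>"
  have S: "psd S" "S ** S = \<sigma>" using msqrt_props[OF assms] by (auto simp: S_def)
  have hS: "adj S = S" using psd_herm[OF S(1)] by (simp add: herm_def)
  have "S ** outer \<psi> \<psi> ** S = outer (S *v \<psi>) (S *v \<psi>)"
    by (simp add: outer_mult_left outer_mult_right hS)
  moreover have "cinner (S *v \<psi>) (S *v \<psi>) = cinner \<psi> (\<sigma> *v \<psi>)"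
    using herm_cinner[OF psd_herm[OF S(1)], of \<psi> "S *v \<psi>"] S(2) by (simp add: matrix_vector_mul_assoc)
  ultimately show ?thesis unfolding fidelity_def S_def[symmetric] by (simp add: trace_msqrt_rank1)
qed

lemma affinity_pure:
  fixes \<psi> :: "complex^'n::finite"
  assumes "cinner \<psi> \<psi> = 1"
  shows "affinity (outer \<psi> \<psi>) \<sigma> = Re (cinner \<psi> (msqrt \<sigma> *v \<psi>))"
proof -
  have "msqrt (outer \<psi> \<psi>) = outer \<psi> \<psi>"
    by (rule msqrt_eqI) (simp_all add: outer_psd outer_mult_left outer_mv assms)
  then show ?thesis by (simp add: affinity_def mtrace_outer_mult)
qed



lemma orthon_extend_to:
  fixes x :: "nat \<Rightarrow> complex^'n::finite"
  assumes "orthon x {..<k}"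
  shows "k \<le> m \<Longrightarrow> m \<le> CARD('n) \<Longrightarrow> \<exists>X. orthon X {..<m} \<and> (\<forall>i<k. X i = x i)"
proof (induction m)
  case 0 then show ?case using assms by auto
next
  case (Suc m)
  show ?case
  proof (cases "k = Suc m")
    case True then show ?thesis using assms by auto
  next
    case False
    then obtain X where X: "orthon X {..<m}" "\<forall>i<k. X i = x i" using Suc by auto
    obtain w where w: "cinner w w = 1" "\<forall>l\<in>{..<m}. cinner (X l) w = 0"
      using orthon_extend[OF X(1)] Suc.prems by auto
    define X' where "X' = X(m := w)"
    have "orthon X' {..<Suc m}"
      using X(1) w unfolding orthon_def X'_def
      by (auto simp: less_Suc_eq cinner_cnj[symmetric, of w "X _"])
    moreover have "\<forall>i<k. X' i = x i" using X(2) False Suc.prems by (auto simp: X'_def)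
    ultimately show ?thesis by blast
  qed
qed

locale schmidt =
  fixes x :: "nat \<Rightarrow> complex^'a::finite" and y :: "nat \<Rightarrow> complex^'b::finite"
    and lam :: "nat \<Rightarrow> real" and k :: nat
  assumes x_on: "\<forall>i<k. \<forall>j<k. cinner (x i) (x j) = (if i = j then 1 else 0)"
    and y_on: "\<forall>i<k. \<forall>j<k. cinner (y i) (y j) = (if i = j then 1 else 0)"
    and lam_nonneg: "\<forall>i<k. lam i \<ge> 0"
    and lam_dec: "\<forall>i j. i \<le> j \<longrightarrow> j < k \<longrightarrow> lam j \<le> lam i"
    and lam_sum: "(\<Sum>i<k. lam i) = 1"
begin

definition z where "z i = tensor_vec (x i) (y i)"
definition psi where "psi = (\<Sum>i<k. complex_of_real (sqrt (lam i)) *s tensor_vec (x i) (y i))"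
definition D where "D = diagm x {..<k} lam"
definition T where "T = (\<Sum>i<k. (lam i)\<^sup>2)"

lemma ox: "orthon x {..<k}" using x_on by (simp add: orthon_def)
lemma oy: "orthon y {..<k}" using y_on by (simp add: orthon_def)
lemma oz: "orthon z {..<k}" using x_on y_on by (simp add: orthon_def z_def cinner_tensor2)

lemma k_pos: "k > 0" using lam_sum by (cases k) auto

lemma lam0: "lam 0 \<ge> 0" using lam_nonneg k_pos by auto
lemma lam_le0: "i < k \<Longrightarrow> lam i \<le> lam 0" using lam_dec by auto

lemma psi_z: "psi = (\<Sum>i<k. complex_of_real (sqrt (lam i)) *s z i)"
  by (simp add: psi_def z_def)

lemma z_psi: "i < k \<Longrightarrow> cinner (z i) psi = complex_of_real (sqrt (lam i))"
  unfolding psi_z by (rule cinner_expand[OF oz]) auto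

lemma psi_norm: "cinner psi psi = 1"
proof -
  have "cinner psi psi = (\<Sum>i<k. cnj (complex_of_real (sqrt (lam i))) * complex_of_real (sqrt (lam i)))"
    unfolding psi_z by (rule cinner_combo[OF oz]) simp
  also have "\<dots> = (\<Sum>i<k. complex_of_real (lam i))"
    using lam_nonneg by (intro sum.cong refl) (simp flip: of_real_mult)
  also have "\<dots> = 1" using lam_sum by (simp flip: of_real_sum)
  finally show ?thesis .
qed

lemma pin_psi: "pin u psi = (\<Sum>i<k. (complex_of_real (sqrt (lam i)) * cinner u (x i)) *s y i)"
  by (simp add: psi_def pin_sum pin_scale pin_tensor vector_smult_assoc)

lemma ptrace_rho: "ptrace_b (outer psi psi) = D"
proof (rule mat_eq_cinner)
  fix u u'
  have "cinner u (ptrace_b (outer psi psi) *v u') = cinner (pin u' psi) (pin u psi)"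
    by (rule ptrace_outer_cinner)
  also have "\<dots> = (\<Sum>i<k. cnj (complex_of_real (sqrt (lam i)) * cinner u' (x i)) * (complex_of_real (sqrt (lam i)) * cinner u (x i)))"
    unfolding pin_psi by (rule cinner_combo[OF oy]) simp
  also have "\<dots> = (\<Sum>i<k. (complex_of_real (lam i) * cinner (x i) u') * cinner u (x i))"
  proof (intro sum.cong refl)
    fix i assume "i \<in> {..<k}"
    then have "lam i \<ge> 0" using lam_nonneg by auto
    then show "cnj (complex_of_real (sqrt (lam i)) * cinner u' (x i)) * (complex_of_real (sqrt (lam i)) * cinner u (x i))
      = (complex_of_real (lam i) * cinner (x i) u') * cinner u (x i)"
      by (simp add: cinner_cnj ac_simps flip: of_real_mult)
  qed
  also have "\<dots> = cinner u (D *v u')"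
    by (simp add: D_def diagm_mv cinner_sum_right cinner_scale_right ac_simps)
  finally show "cinner u (ptrace_b (outer psi psi) *v u') = cinner u (D *v u')" .
qed

lemma D_psd: "psd D" unfolding D_def by (rule diagm_psd) (use lam_nonneg in auto)

lemma k_le: "k \<le> CARD('a)" using orthon_card[OF ox] by simp

end



lemma eb_orthon: "eigenbasis M \<alpha> \<Longrightarrow> orthon \<alpha> UNIV"
  by (simp add: eigenbasis_def orthonormal_basis_def orthon_def)

lemma Re_sum_ofreal_mult: "Re (\<Sum>a\<in>S. complex_of_real (f a) * g a) = (\<Sum>a\<in>S. f a * Re (g a))"
  by (simp add: Re_sum)

context schmidt begin

lemma D_herm: "herm D" using psd_herm[OF D_psd] .

lemma D_mv: "D *v v = (\<Sum>i<k. (complex_of_real (lam i) * cinner (x i) v) *s x i)"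
  by (simp add: D_def diagm_mv)

lemma pin_quad: "cinner (pin u psi) (pin u psi) = complex_of_real (Re (cinner u (D *v u)))"
  using ptrace_outer_cinner[of u psi u] ptrace_rho herm_quad_real[OF D_herm, of u] by simp

lemma quad_le: "Re (cinner v (D *v v)) \<le> lam 0 * Re (cinner v v)"
proof -
  have "Re (cinner v (D *v v)) = (\<Sum>i<k. lam i * (cmod (cinner (x i) v))\<^sup>2)"
    by (simp add: D_def diagm_quad)
  also have "\<dots> \<le> (\<Sum>i<k. lam 0 * (cmod (cinner (x i) v))\<^sup>2)"
    by (intro sum_mono mult_right_mono) (auto intro: lam_le0)
  also have "\<dots> = lam 0 * (\<Sum>i<k. (cmod (cinner (x i) v))\<^sup>2)" by (simp add: sum_distrib_left)
  also have "\<dots> \<le> lam 0 * Re (cinner v v)"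
    by (intro mult_left_mono bessel[OF ox] lam0) simp
  finally show ?thesis .
qed

lemma quad_nonneg: "Re (cinner v (D *v v)) \<ge> 0" using D_psd by (simp add: psd_def)

lemma mu_sq_sum:
  assumes eb: "eigenbasis D \<alpha>"
  shows "(\<Sum>a\<in>UNIV. (Re (cinner (\<alpha> a) (D *v \<alpha> a)))\<^sup>2) = T"
proof -
  have o: "orthon \<alpha> UNIV" by (rule eb_orthon[OF eb])
  have unit: "cinner (\<alpha> a) (\<alpha> a) = 1" for a using o by (simp add: orthon_def)
  define \<mu> where "\<mu> a = Re (cinner (\<alpha> a) (D *v \<alpha> a))" for a
  have sq: "(\<mu> a)\<^sup>2 = (\<Sum>i<k. (lam i)\<^sup>2 * (cmod (cinner (x i) (\<alpha> a)))\<^sup>2)" for a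
  proof -
    obtain c where c: "D *v \<alpha> a = c *s \<alpha> a" using eb by (auto simp: eigenbasis_def)
    have "c = cinner (\<alpha> a) (D *v \<alpha> a)" using unit by (simp add: c cinner_scale_right)
    then have c': "c = complex_of_real (\<mu> a)" unfolding \<mu>_def using herm_quad_real[OF D_herm] by simp
    have "cinner (D *v \<alpha> a) (D *v \<alpha> a) = complex_of_real ((\<mu> a)\<^sup>2)"
      by (simp add: c c' cinner_scale_left cinner_scale_right unit power2_eq_square)
    moreover have "cinner (D *v \<alpha> a) (D *v \<alpha> a) = (\<Sum>i<k. cnj (complex_of_real (lam i) * cinner (x i) (\<alpha> a)) * (complex_of_real (lam i) * cinner (x i) (\<alpha> a)))"
      unfolding D_mv by (rule cinner_combo[OF ox]) simp
    moreover have "\<dots> = (\<Sum>i<k. complex_of_real ((lam i)\<^sup>2 * (cmod (cinner (x i) (\<alpha> a)))\<^sup>2))"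
    proof (intro sum.cong refl)
      fix i
      have "cnj (complex_of_real (lam i) * cinner (x i) (\<alpha> a)) * (complex_of_real (lam i) * cinner (x i) (\<alpha> a))
          = complex_of_real ((lam i)\<^sup>2) * (cnj (cinner (x i) (\<alpha> a)) * cinner (x i) (\<alpha> a))"
        by (simp add: power2_eq_square ac_simps)
      also have "\<dots> = complex_of_real ((lam i)\<^sup>2 * (cmod (cinner (x i) (\<alpha> a)))\<^sup>2)"
        by (simp only: cnj_mult_self of_real_mult)
      finally show "cnj (complex_of_real (lam i) * cinner (x i) (\<alpha> a)) * (complex_of_real (lam i) * cinner (x i) (\<alpha> a))
          = complex_of_real ((lam i)\<^sup>2 * (cmod (cinner (x i) (\<alpha> a)))\<^sup>2)" .
    qed
    ultimately have "complex_of_real ((\<mu> a)\<^sup>2) = (\<Sum>i<k. complex_of_real ((lam i)\<^sup>2 * (cmod (cinner (x i) (\<alpha> a)))\<^sup>2))"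
      by metis
    then show ?thesis by (simp only: of_real_sum[symmetric] of_real_eq_iff)
  qed
  have pars: "(\<Sum>a\<in>UNIV. (cmod (cinner (x i) (\<alpha> a)))\<^sup>2) = 1" if "i < k" for i
  proof -
    have "cinner (x i) (x i) = (\<Sum>a\<in>UNIV. cnj (cinner (\<alpha> a) (x i)) * cinner (\<alpha> a) (x i))"
      by (rule orthon_parseval[OF o]) simp_all
    also have "\<dots> = (\<Sum>a\<in>UNIV. complex_of_real ((cmod (cinner (x i) (\<alpha> a)))\<^sup>2))"
      by (intro sum.cong refl) (simp add: mult_cnj_self cinner_cnj[of "x i", symmetric])
    finally have "(\<Sum>a\<in>UNIV. complex_of_real ((cmod (cinner (x i) (\<alpha> a)))\<^sup>2)) = 1"
      using x_on that by simp
    then show ?thesis by (simp only: of_real_sum[symmetric] of_real_eq_1_iff)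
  qed
  have "(\<Sum>a\<in>UNIV. (\<mu> a)\<^sup>2) = (\<Sum>i<k. (lam i)\<^sup>2 * (\<Sum>a\<in>UNIV. (cmod (cinner (x i) (\<alpha> a)))\<^sup>2))"
    unfolding sq by (simp add: sum_distrib_left) (rule sum.swap)
  also have "\<dots> = T" unfolding T_def by (intro sum.cong refl) (simp add: pars)
  finally show ?thesis unfolding \<mu>_def .
qed

lemma aff_bound:
  assumes eb: "eigenbasis D \<alpha>" and s: "\<sigma> \<in> cq_states \<alpha>"
  shows "0 \<le> affinity (outer psi psi) \<sigma> \<and> affinity (outer psi psi) \<sigma> \<le> sqrt T"
proof -
  have o: "orthon \<alpha> UNIV" by (rule eb_orthon[OF eb])
  obtain p \<sigma>s where p: "\<forall>i. p i \<ge> 0" "sum p UNIV = 1" and ds: "\<forall>i. density (\<sigma>s i)" and se: "\<sigma> = cqm \<alpha> p \<sigma>s"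
    using s by (auto simp: cq_states_cqm)
  define w where "w a = pin (\<alpha> a) psi" for a
  define \<mu> where "\<mu> a = Re (cinner (\<alpha> a) (D *v \<alpha> a))" for a
  have ww: "Re (cinner (w a) (w a)) = \<mu> a" for a by (simp add: w_def \<mu>_def pin_quad)
  have aff: "affinity (outer psi psi) \<sigma> = (\<Sum>a\<in>UNIV. sqrt (p a) * Re (cinner (w a) (msqrt (\<sigma>s a) *v w a)))"
    unfolding affinity_pure[OF psi_norm] se cqm_msqrt[OF o p(1)[rule_format] ds[rule_format]] cqm_quad w_def
    by (rule Re_sum_ofreal_mult)
  have t0: "0 \<le> Re (cinner (w a) (msqrt (\<sigma>s a) *v w a))" for a using density_bounds(3)[OF ds[rule_format]] .
  have t1: "Re (cinner (w a) (msqrt (\<sigma>s a) *v w a)) \<le> \<mu> a" for a using density_bounds(2)[OF ds[rule_format]] ww by metis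
  have "0 \<le> affinity (outer psi psi) \<sigma>" unfolding aff by (intro sum_nonneg mult_nonneg_nonneg) (use t0 p in auto)
  moreover have "affinity (outer psi psi) \<sigma> \<le> (\<Sum>a\<in>UNIV. sqrt (p a) * \<mu> a)"
    unfolding aff by (intro sum_mono mult_left_mono t1) (use p in auto)
  moreover have "(\<Sum>a\<in>UNIV. sqrt (p a) * \<mu> a) \<le> sqrt T"
  proof -
    have mn: "\<mu> a \<ge> 0" for a unfolding \<mu>_def by (rule quad_nonneg)
    have "(\<Sum>a\<in>UNIV. sqrt (p a) * \<mu> a) = (\<Sum>a\<in>UNIV. \<bar>sqrt (p a)\<bar> * \<bar>\<mu> a\<bar>)" using mn p by simp
    also have "\<dots> \<le> L2_set (\<lambda>a. sqrt (p a)) UNIV * L2_set \<mu> UNIV" by (rule L2_set_mult_ineq)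
    also have "L2_set (\<lambda>a. sqrt (p a)) UNIV = 1" using p by (simp add: L2_set_def)
    also have "L2_set \<mu> UNIV = sqrt T" using mu_sq_sum[OF eb] by (simp add: L2_set_def \<mu>_def)
    finally show ?thesis by simp
  qed
  ultimately show ?thesis by linarith
qed

lemma fid_bound:
  assumes eb: "eigenbasis D \<alpha>" and s: "\<sigma> \<in> cq_states \<alpha>"
  shows "(fidelity (outer psi psi) \<sigma>)\<^sup>2 \<le> lam 0"
proof -
  have o: "orthon \<alpha> UNIV" by (rule eb_orthon[OF eb])
  have unit: "cinner (\<alpha> a) (\<alpha> a) = 1" for a using o by (simp add: orthon_def)
  obtain p \<sigma>s where p: "\<forall>i. p i \<ge> 0" "sum p UNIV = 1" and ds: "\<forall>i. density (\<sigma>s i)" and se: "\<sigma> = cqm \<alpha> p \<sigma>s"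
    using s by (auto simp: cq_states_cqm)
  have ps: "psd \<sigma>" unfolding se by (rule cqm_psd) (use p ds in \<open>auto simp: density_def\<close>)
  define w where "w a = pin (\<alpha> a) psi" for a
  define \<mu> where "\<mu> a = Re (cinner (\<alpha> a) (D *v \<alpha> a))" for a
  have ww: "Re (cinner (w a) (w a)) = \<mu> a" for a by (simp add: w_def \<mu>_def pin_quad)
  have mle: "\<mu> a \<le> lam 0" for a using quad_le[of "\<alpha> a"] unit by (simp add: \<mu>_def)
  have q: "Re (cinner psi (\<sigma> *v psi)) = (\<Sum>a\<in>UNIV. p a * Re (cinner (w a) (\<sigma>s a *v w a)))"
    unfolding se cqm_quad w_def by (rule Re_sum_ofreal_mult)
  have "Re (cinner psi (\<sigma> *v psi)) \<le> (\<Sum>a\<in>UNIV. p a * lam 0)"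
    unfolding q
  proof (intro sum_mono mult_left_mono)
    fix a
    show "Re (cinner (w a) (\<sigma>s a *v w a)) \<le> lam 0"
      using density_bounds(1)[OF ds[rule_format, of a], of "w a"] ww[of a] mle[of a] by linarith
  qed (use p in auto)
  also have "\<dots> = lam 0" using p by (simp flip: sum_distrib_right)
  finally have le: "Re (cinner psi (\<sigma> *v psi)) \<le> lam 0" .
  have ge: "Re (cinner psi (\<sigma> *v psi)) \<ge> 0" using ps by (simp add: psd_def)
  show ?thesis unfolding fidelity_pure[OF ps] using le ge by simp
qed

end



lemma Cbasis_ge:
  fixes d :: "complex^('a::finite\<times>'b::finite)^('a\<times>'b) \<Rightarrow> complex^('a\<times>'b)^('a\<times>'b) \<Rightarrow> real"
  assumes "cq_states \<alpha> \<noteq> ({} :: (complex^('a\<times>'b)^('a\<times>'b)) set)" "\<And>\<sigma>. \<sigma> \<in> cq_states \<alpha> \<Longrightarrow> v \<le> d \<rho> \<sigma>"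
  shows "v \<le> C_basis d \<rho> \<alpha>"
  unfolding C_basis_def
proof (rule cInf_greatest)
  obtain \<sigma>0 :: "complex^('a\<times>'b)^('a\<times>'b)" where "\<sigma>0 \<in> cq_states \<alpha>" using assms(1) by auto
  then have "d \<rho> \<sigma>0 \<in> {d \<rho> \<sigma> |\<sigma>. \<sigma> \<in> cq_states \<alpha>}" by blast
  then show "{d \<rho> \<sigma> |\<sigma>. \<sigma> \<in> cq_states \<alpha>} \<noteq> {}" by blast
next
  fix w assume "w \<in> {d \<rho> \<sigma> |\<sigma>. \<sigma> \<in> cq_states \<alpha>}"
  then obtain \<sigma> where "w = d \<rho> \<sigma>" "\<sigma> \<in> cq_states \<alpha>" by blast
  then show "v \<le> w" using assms(2) by simp
qed

lemma Cbasis_eq: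
  assumes "\<sigma>0 \<in> cq_states \<alpha>" "d \<rho> \<sigma>0 = v" "\<And>\<sigma>. \<sigma> \<in> cq_states \<alpha> \<Longrightarrow> v \<le> d \<rho> \<sigma>"
  shows "C_basis d \<rho> \<alpha> = v"
  unfolding C_basis_def by (rule cInf_eq_minimum) (use assms in auto)

lemma Ccc_eq:
  assumes "eigenbasis (ptrace_b \<rho>) \<alpha>0" "C_basis d \<rho> \<alpha>0 = v"
    "\<And>\<alpha>. eigenbasis (ptrace_b \<rho>) \<alpha> \<Longrightarrow> v \<le> C_basis d \<rho> \<alpha>"
  shows "C_cc d \<rho> = v"
  unfolding C_cc_def by (rule cInf_eq_minimum) (use assms in auto)

lemma outer_density: "cinner u u = 1 \<Longrightarrow> density (outer u u)"
  by (simp add: density_def outer_psd mtrace_outer)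

context schmidt begin

lemma cq_nonempty: "cq_states (\<alpha>::'a \<Rightarrow> complex^'a) \<noteq> ({} :: (complex^('a \<times> 'b)^('a \<times> 'b)) set)"
proof -
  have "cinner (y 0) (y 0) = 1" using y_on k_pos by auto
  then have d: "density (outer (y 0) (y 0))" by (rule outer_density)
  have "sum (\<lambda>_::'a. 1 / real CARD('a)) UNIV = 1" by simp
  then have "cqm \<alpha> (\<lambda>_. 1 / real CARD('a)) (\<lambda>_. outer (y 0) (y 0)) \<in> cq_states \<alpha>"
    unfolding cq_states_cqm using d by (intro exI[of _ "\<lambda>_. 1 / real CARD('a)"] exI[of _ "\<lambda>_. outer (y 0) (y 0)"]) auto
  then show ?thesis by auto
qed

lemma good_basis:
  "\<exists>\<alpha>0. eigenbasis D \<alpha>0 \<and>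
     (\<forall>m F R. m \<le> k \<longrightarrow> (\<forall>l<m. F l \<ge> 0) \<longrightarrow> (\<Sum>l<m. F l) = 1 \<longrightarrow> (\<forall>l<m. density (R l)) \<longrightarrow>
        (\<Sum>l<m. F l *\<^sub>R tensor_mat (outer (x l) (x l)) ((R::nat \<Rightarrow> complex^'b^'b) l)) \<in> cq_states \<alpha>0)"
proof -
  let ?n = "CARD('a)"
  obtain X where X: "orthon X {..<?n}" "\<forall>i<k. X i = x i"
    using orthon_extend_to[OF ox k_le order.refl] by blast
  define h where "h = from_nat_into (UNIV :: 'a set)"
  have bh: "bij_betw h {..<?n} UNIV" unfolding h_def using bij_betw_from_nat_into_finite[of "UNIV::'a set"] by simp
  define g where "g = inv_into {..<?n} h"
  have bg: "bij_betw g UNIV {..<?n}" unfolding g_def by (rule bij_betw_inv_into[OF bh])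
  define \<alpha>0 where "\<alpha>0 a = X (g a)" for a
  have gin: "g a < ?n" for a using bg by (auto simp: bij_betw_def)
  have ginj: "g a = g b \<longleftrightarrow> a = b" for a b using bg by (auto simp: bij_betw_def inj_on_def)
  have o0: "orthonormal_basis \<alpha>0"
    using X(1) gin ginj by (auto simp: orthonormal_basis_def orthon_def \<alpha>0_def)
  have eig: "\<exists>\<mu>. D *v X l = \<mu> *s X l" if l: "l < ?n" for l
  proof (cases "l < k")
    case True
    then show ?thesis using diagm_mv_e[OF ox, of l lam] X(2) by (auto simp: D_def)
  next
    case False
    have "D *v X l = (\<Sum>i<k. (complex_of_real (lam i) * cinner (x i) (X l)) *s x i)" by (rule D_mv)
    also have "\<dots> = 0"
    proof (intro sum.neutral ballI)
      fix i assume "i \<in> {..<k}"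
      then have "cinner (x i) (X l) = cinner (X i) (X l)" "i \<noteq> l" "i < ?n" using X(2) False k_le by auto
      then have "cinner (x i) (X l) = 0" using X(1) l by (simp add: orthon_def)
      then show "(complex_of_real (lam i) * cinner (x i) (X l)) *s x i = 0" by simp
    qed
    finally show ?thesis by (intro exI[of _ 0]) simp
  qed
  have eb: "eigenbasis D \<alpha>0" using o0 eig gin by (auto simp: eigenbasis_def \<alpha>0_def)
  have mem: "(\<Sum>l<m. F l *\<^sub>R tensor_mat (outer (x l) (x l)) (R l)) \<in> cq_states \<alpha>0"
    if m: "m \<le> k" and F: "\<forall>l<m. F l \<ge> 0" "(\<Sum>l<m. F l) = 1" and R: "\<forall>l<m. density (R l)" for m F and R :: "nat \<Rightarrow> complex^'b^'b"
  proof -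
    define p where "p a = (if g a < m then F (g a) else 0)" for a
    define \<sigma>s where "\<sigma>s a = (if g a < m then R (g a) else R 0)" for a
    have mn: "m \<le> ?n" using m k_le by simp
    have m0: "0 < m" using F(2) by (cases m) auto
    define hh where "hh l = (if l < m then F l else 0) *\<^sub>R tensor_mat (outer (X l) (X l)) (if l < m then R l else R 0)" for l
    have "cqm \<alpha>0 p \<sigma>s = (\<Sum>a\<in>UNIV. hh (g a))"
      by (simp add: cqm_def hh_def p_def \<sigma>s_def \<alpha>0_def)
    also have "\<dots> = (\<Sum>l<?n. hh l)" by (rule sum.reindex_bij_betw[OF bg])
    also have "\<dots> = (\<Sum>l<m. hh l)"
    proof (rule sum.mono_neutral_right)
      show "{..<m} \<subseteq> {..<?n}" using mn by auto
      show "\<forall>i\<in>{..<?n} - {..<m}. hh i = 0" by (simp add: hh_def)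
    qed simp
    also have "\<dots> = (\<Sum>l<m. F l *\<^sub>R tensor_mat (outer (x l) (x l)) (R l))"
      by (intro sum.cong refl) (use X(2) m in \<open>auto simp: hh_def\<close>)
    finally have e: "cqm \<alpha>0 p \<sigma>s = (\<Sum>l<m. F l *\<^sub>R tensor_mat (outer (x l) (x l)) (R l))" .
    have "sum p UNIV = (\<Sum>l<?n. if l < m then F l else 0)"
      unfolding p_def by (rule sum.reindex_bij_betw[OF bg, where g="\<lambda>l. if l < m then F l else 0"])
    also have "\<dots> = (\<Sum>l<m. if l < m then F l else 0)"
    proof (rule sum.mono_neutral_right)
      show "{..<m} \<subseteq> {..<?n}" using mn by auto
    qed simp_all
    also have "\<dots> = 1" using F(2) by simp
    finally have sp: "sum p UNIV = 1" .
    have pn: "\<forall>a. p a \<ge> 0" using F(1) by (simp add: p_def)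
    have ds: "\<forall>a. density (\<sigma>s a)" using R m0 by (simp add: \<sigma>s_def)
    show ?thesis unfolding cq_states_cqm
      by (rule exI[of _ p], rule exI[of _ \<sigma>s]) (simp only: pn sp ds e[symmetric] simp_thms)
  qed
  show ?thesis using eb mem by blast
qed

lemma T_pos: "T > 0"
proof (rule ccontr)
  assume "\<not> T > 0"
  moreover have "T \<ge> 0" unfolding T_def by (simp add: sum_nonneg)
  ultimately have "T = 0" by simp
  then have "\<forall>i\<in>{..<k}. (lam i)\<^sup>2 = 0" unfolding T_def by (subst (asm) sum_nonneg_eq_0_iff) auto
  then have "(\<Sum>i<k. lam i) = 0" by simp
  then show False using lam_sum by simp
qed

definition sopt where "sopt = (\<Sum>i<k. ((lam i)\<^sup>2 / (\<Sum>j<k. (lam j)\<^sup>2)) *\<^sub>R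
                  outer (tensor_vec (x i) (y i)) (tensor_vec (x i) (y i)))"

lemma sopt_diagm: "sopt = diagm z {..<k} (\<lambda>i. (lam i)\<^sup>2 / T)"
  by (simp add: sopt_def diagm_def z_def T_def)

lemma aff_sopt: "affinity (outer psi psi) sopt = sqrt T"
proof -
  have ms: "msqrt sopt = diagm z {..<k} (\<lambda>i. sqrt ((lam i)\<^sup>2 / T))"
    unfolding sopt_diagm by (rule msqrt_diagm[OF oz]) (use T_pos in auto)
  have "affinity (outer psi psi) sopt = (\<Sum>i<k. sqrt ((lam i)\<^sup>2 / T) * (cmod (cinner (z i) psi))\<^sup>2)"
    unfolding affinity_pure[OF psi_norm] ms diagm_quad by simp
  also have "\<dots> = (\<Sum>i<k. (lam i)\<^sup>2 / sqrt T)"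
  proof (intro sum.cong refl)
    fix i assume i: "i \<in> {..<k}"
    then have l: "lam i \<ge> 0" using lam_nonneg by auto
    have "(cmod (cinner (z i) psi))\<^sup>2 = lam i" using z_psi[of i] i l by simp
    moreover have "sqrt ((lam i)\<^sup>2 / T) = lam i / sqrt T" using l by (simp add: real_sqrt_divide)
    ultimately show "sqrt ((lam i)\<^sup>2 / T) * (cmod (cinner (z i) psi))\<^sup>2 = (lam i)\<^sup>2 / sqrt T"
      by (simp add: power2_eq_square)
  qed
  also have "\<dots> = T / sqrt T" by (simp add: T_def sum_divide_distrib)
  also have "\<dots> = sqrt T" using T_pos by (simp add: real_div_sqrt)
  finally show ?thesis .
qed

lemma mainA:
  "C_cc d_A (outer psi psi) = 1 - T \<and>
   (\<exists>\<alpha>. eigenbasis (ptrace_b (outer psi psi)) \<alpha> \<and> sopt \<in> cq_states \<alpha> \<and> d_A (outer psi psi) sopt = C_cc d_A (outer psi psi))"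
proof -
  obtain \<alpha>0 where eb: "eigenbasis D \<alpha>0" and mem: "\<forall>m F R. m \<le> k \<longrightarrow> (\<forall>l<m. F l \<ge> 0) \<longrightarrow> (\<Sum>l<m. F l) = 1 \<longrightarrow> (\<forall>l<m. density (R l)) \<longrightarrow>
        (\<Sum>l<m. F l *\<^sub>R tensor_mat (outer (x l) (x l)) ((R::nat \<Rightarrow> complex^'b^'b) l)) \<in> cq_states \<alpha>0"
    using good_basis by blast
  have sopt_eq: "sopt = (\<Sum>l<k. ((lam l)\<^sup>2 / T) *\<^sub>R tensor_mat (outer (x l) (x l)) (outer (y l) (y l)))"
    by (simp add: sopt_def tensor_outer T_def)
  have s1: "(\<Sum>l<k. (lam l)\<^sup>2 / T) = 1" using T_pos by (simp add: T_def flip: sum_divide_distrib)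
  have d1: "\<forall>l<k. density (outer (y l) (y l))" using y_on by (auto intro: outer_density)
  have "sopt \<in> cq_states \<alpha>0"
    unfolding sopt_eq
    by (rule mem[rule_format, of k "\<lambda>l. (lam l)\<^sup>2 / T" "\<lambda>l. outer (y l) (y l)"]) (use s1 d1 T_pos in auto)
  have lb: "1 - T \<le> d_A (outer psi psi) \<sigma>" if "eigenbasis D \<alpha>" "\<sigma> \<in> cq_states \<alpha>" for \<alpha> \<sigma>
  proof -
    have b: "0 \<le> affinity (outer psi psi) \<sigma>" "affinity (outer psi psi) \<sigma> \<le> sqrt T"
      using aff_bound[OF that] by auto
    have "(affinity (outer psi psi) \<sigma>)\<^sup>2 \<le> (sqrt T)\<^sup>2" by (rule power_mono[OF b(2) b(1)])
    then show ?thesis using T_pos by (simp add: d_A_def)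
  qed
  have dsopt: "d_A (outer psi psi) sopt = 1 - T" using T_pos by (simp add: d_A_def aff_sopt)
  have cb0: "C_basis d_A (outer psi psi) \<alpha>0 = 1 - T"
    by (rule Cbasis_eq[where d=d_A, OF \<open>sopt \<in> cq_states \<alpha>0\<close> dsopt]) (rule lb[OF eb])
  have cc: "C_cc d_A (outer psi psi) = 1 - T"
  proof (rule Ccc_eq)
    show "eigenbasis (ptrace_b (outer psi psi)) \<alpha>0" using eb ptrace_rho by simp
    show "C_basis d_A (outer psi psi) \<alpha>0 = 1 - T" by (rule cb0)
    fix \<alpha> assume "eigenbasis (ptrace_b (outer psi psi)) \<alpha>"
    then have "eigenbasis D \<alpha>" using ptrace_rho by simp
    then show "1 - T \<le> C_basis d_A (outer psi psi) \<alpha>"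
      by (intro Cbasis_ge cq_nonempty) (rule lb)
  qed
  show ?thesis using cc dsopt eb ptrace_rho \<open>sopt \<in> cq_states \<alpha>0\<close> by auto
qed

lemma mainF: "C_cc d_F (outer psi psi) = 1 - lam 0"
proof -
  obtain \<alpha>0 where eb: "eigenbasis D \<alpha>0" and mem: "\<forall>m F R. m \<le> k \<longrightarrow> (\<forall>l<m. F l \<ge> 0) \<longrightarrow> (\<Sum>l<m. F l) = 1 \<longrightarrow> (\<forall>l<m. density (R l)) \<longrightarrow>
        (\<Sum>l<m. F l *\<^sub>R tensor_mat (outer (x l) (x l)) ((R::nat \<Rightarrow> complex^'b^'b) l)) \<in> cq_states \<alpha>0"
    using good_basis by blast
  define sF where "sF = outer (z 0) (z 0)"
  have sF_eq: "sF = (\<Sum>l<1. (1::real) *\<^sub>R tensor_mat (outer (x l) (x l)) (outer (y l) (y l)))"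
    by (simp add: sF_def tensor_outer z_def)
  have sFm: "sF \<in> cq_states \<alpha>0"
    unfolding sF_eq
    by (rule mem[rule_format, of 1 "\<lambda>_. 1" "\<lambda>l. outer (y l) (y l)"]) (use k_pos y_on in \<open>auto intro: outer_density\<close>)
  have "(fidelity (outer psi psi) sF)\<^sup>2 = lam 0"
  proof -
    have "cinner psi (sF *v psi) = cinner (z 0) psi * cinner psi (z 0)"
      by (simp add: sF_def outer_mv cinner_scale_right)
    also have "\<dots> = complex_of_real (lam 0)"
    proof -
      have a: "cinner (z 0) psi = complex_of_real (sqrt (lam 0))" by (rule z_psi[OF k_pos])
      have b: "cinner psi (z 0) = complex_of_real (sqrt (lam 0))" using a cinner_cnj[of "z 0" psi] by simp
      show ?thesis using lam0 by (simp add: a b flip: of_real_mult)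
    qed
    finally have "Re (cinner psi (sF *v psi)) = lam 0" by simp
    then show ?thesis unfolding fidelity_pure[OF outer_psd[of "z 0", folded sF_def]] using lam0 by simp
  qed
  then have dsF: "d_F (outer psi psi) sF = 1 - lam 0" by (simp add: d_F_def)
  have lb: "1 - lam 0 \<le> d_F (outer psi psi) \<sigma>" if "eigenbasis D \<alpha>" "\<sigma> \<in> cq_states \<alpha>" for \<alpha> \<sigma>
    using fid_bound[OF that] by (simp add: d_F_def)
  show ?thesis
  proof (rule Ccc_eq)
    show "eigenbasis (ptrace_b (outer psi psi)) \<alpha>0" using eb ptrace_rho by simp
    show "C_basis d_F (outer psi psi) \<alpha>0 = 1 - lam 0"
      by (rule Cbasis_eq[where d=d_F, OF sFm dsF]) (rule lb[OF eb])
    fix \<alpha> assume "eigenbasis (ptrace_b (outer psi psi)) \<alpha>"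
    then have "eigenbasis D \<alpha>" using ptrace_rho by simp
    then show "1 - lam 0 \<le> C_basis d_F (outer psi psi) \<alpha>"
      by (intro Cbasis_ge cq_nonempty) (rule lb)
  qed
qed

end

theorem mainTheorem14:
  fixes x :: "nat \<Rightarrow> complex^'a" and y :: "nat \<Rightarrow> complex^'b"
    and lam :: "nat \<Rightarrow> real" and k :: nat
  assumes x_on: "\<forall>i<k. \<forall>j<k. cinner (x i) (x j) = (if i = j then 1 else 0)"
    and y_on: "\<forall>i<k. \<forall>j<k. cinner (y i) (y j) = (if i = j then 1 else 0)"
    and lam_nonneg: "\<forall>i<k. lam i \<ge> 0"
    and lam_dec: "\<forall>i j. i \<le> j \<longrightarrow> j < k \<longrightarrow> lam j \<le> lam i"
    and lam_sum: "(\<Sum>i<k. lam i) = 1"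
  defines "\<rho> \<equiv> outer (\<Sum>i<k. complex_of_real (sqrt (lam i)) *s tensor_vec (x i) (y i))
                          (\<Sum>i<k. complex_of_real (sqrt (lam i)) *s tensor_vec (x i) (y i))"
    and "\<sigma>opt \<equiv> (\<Sum>i<k. ((lam i)\<^sup>2 / (\<Sum>j<k. (lam j)\<^sup>2)) *\<^sub>R
                  outer (tensor_vec (x i) (y i)) (tensor_vec (x i) (y i)))"
  shows "C_cc d_A \<rho> = 1 - (\<Sum>i<k. (lam i)\<^sup>2)
         \<and> C_cc d_F \<rho> = 1 - lam 0
         \<and> (\<exists>\<alpha>. eigenbasis (ptrace_b \<rho>) \<alpha> \<and> \<sigma>opt \<in> cq_states \<alpha> \<and> d_A \<rho> \<sigma>opt = C_cc d_A \<rho>)"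
proof -
  interpret schmidt x y lam k using assms by unfold_locales auto
  have r: "\<rho> = outer psi psi" by (simp add: \<rho>_def psi_def)
  have s: "\<sigma>opt = sopt" by (simp add: \<sigma>opt_def sopt_def)
  show ?thesis using mainA mainF unfolding r s T_def by auto
qed


end
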